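(* Let $h$ be a fixed positive integer. For positive integers $u,v,w$ let $g(u,v,w)=1$ if the system of congruences $n\equiv -h \pmod u$, $n\equiv 0\pmod v$, $n\equiv h\pmod w$ has an integer solution $n$, and $g(u,v,w)=0$ otherwise. Then, as $x\to\infty$, $$\sum_{u,v,w\le x}\frac{g(u,v,w)}{[u,v,w]}=\Delta(h)\prod_{p}\Big(1-\frac1p\Big)^2\Big(1+\frac2p\Big)(\log x)^3+O_h\big((\log x)^2\big),$$ where $\Delta(h)$ is the non-zero constant $$\Delta(h)=\prod_{p\mid 2h}\Big(1-\frac1p\Big)\Big(1+\frac2p\Big)^{-1}\left(\sum_{\nu_1,\nu_2,\nu_3\ge0}\frac{g(p^{\nu_1},p^{\nu_2},p^{\nu_3})}{[p^{\nu_1},p^{\nu_2},p^{\nu_3}]}\right).$$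
   Context: $[u,v,w]$ denotes the least common multiple of $u,v,w$; products over $p$ run over primes; the sum on the left is over positive integers $u,v,w\le x$. *)

theory Defs
  imports "HOL-Analysis.Analysis" "HOL-Number_Theory.Number_Theory" "HOL-Library.Landau_Symbols"
begin

definition gsys :: "nat \<Rightarrow> nat \<Rightarrow> nat \<Rightarrow> nat \<Rightarrow> real" where
  "gsys h u v w = (if \<exists>n::int. [n = - int h] (mod int u) \<and> [n = 0] (mod int v) \<and> [n = int h] (mod int w)
                   then 1 else 0)"

definition lcm3 :: "nat \<Rightarrow> nat \<Rightarrow> nat \<Rightarrow> nat" where
  "lcm3 u v w = lcm u (lcm v w)"

definition Ssum :: "nat \<Rightarrow> real \<Rightarrow> real" where
  "Ssum h x = (\<Sum>u\<in>{1..nat \<lfloor>x\<rfloor>}. \<Sum>v\<in>{1..nat \<lfloor>x\<rfloor>}. \<Sum>w\<in>{1..nat \<lfloor>x\<rfloor>}.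
                  gsys h u v w / real (lcm3 u v w))"

definition local_sum :: "nat \<Rightarrow> nat \<Rightarrow> real" where
  "local_sum h p = (\<Sum>\<^sub>\<infinity>(a,b,c)\<in>(UNIV :: (nat \<times> nat \<times> nat) set).
                     gsys h (p ^ a) (p ^ b) (p ^ c) / real (lcm3 (p ^ a) (p ^ b) (p ^ c)))"

definition Delta :: "nat \<Rightarrow> real" where
  "Delta h = (\<Prod>p\<in>{p. prime p \<and> p dvd 2 * h}.
                (1 - 1 / real p) * inverse (1 + 2 / real p) * local_sum h p)"

definition euler_prod :: real where
  "euler_prod = prodinf (\<lambda>n. if prime n then (1 - 1 / real n)^2 * (1 + 2 / real n) else 1)"

end

theory Submission
  imports Defs
begin

definition mx :: "nat \<times> nat \<times> nat \<Rightarrow> nat" where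
  "mx e = (case e of (a,b,c) \<Rightarrow> max a (max b c))"
definition tot :: "nat \<times> nat \<times> nat \<Rightarrow> nat" where
  "tot e = (case e of (a,b,c) \<Rightarrow> a + b + c)"

definition fl :: "nat \<Rightarrow> nat \<Rightarrow> nat \<times> nat \<times> nat \<Rightarrow> real" where
  "fl h p = (\<lambda>(a,b,c). gsys h (p ^ a) (p ^ b) (p ^ c) / real (lcm3 (p ^ a) (p ^ b) (p ^ c)))"

definition S1 :: "nat \<Rightarrow> (nat \<times> nat \<times> nat \<Rightarrow> real) \<Rightarrow> nat \<times> nat \<times> nat \<Rightarrow> real" where
  "S1 p \<phi> = (\<lambda>(a,b,c). \<phi> (a,b,c) - (if a > 0 then \<phi> (a-1,b,c) / real p else 0))"
definition S2 :: "nat \<Rightarrow> (nat \<times> nat \<times> nat \<Rightarrow> real) \<Rightarrow> nat \<times> nat \<times> nat \<Rightarrow> real" where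
  "S2 p \<phi> = (\<lambda>(a,b,c). \<phi> (a,b,c) - (if b > 0 then \<phi> (a,b-1,c) / real p else 0))"
definition S3 :: "nat \<Rightarrow> (nat \<times> nat \<times> nat \<Rightarrow> real) \<Rightarrow> nat \<times> nat \<times> nat \<Rightarrow> real" where
  "S3 p \<phi> = (\<lambda>(a,b,c). \<phi> (a,b,c) - (if c > 0 then \<phi> (a,b,c-1) / real p else 0))"

definition kl :: "nat \<Rightarrow> nat \<Rightarrow> nat \<times> nat \<times> nat \<Rightarrow> real" where
  "kl h p = S1 p (S2 p (S3 p (fl h p)))"

lemma lcm_pp:
  fixes p :: nat
  shows "lcm (p ^ a) (p ^ b) = p ^ max a b"
  by (cases "a \<le> b") (auto simp: max_def le_imp_power_dvd)

lemma lcm3_pp: "lcm3 (p ^ a) (p ^ b) (p ^ c) = (p::nat) ^ mx (a,b,c)"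
  by (simp add: lcm3_def lcm_pp mx_def)

lemma gsys_01: "gsys h u v w = 0 \<or> gsys h u v w = 1"
  by (simp add: gsys_def)

lemma gsys_nonneg: "gsys h u v w \<ge> 0" and gsys_le1: "gsys h u v w \<le> 1"
  by (simp_all add: gsys_def)

lemma gsys_111: "gsys h 1 1 1 = 1"
  unfolding gsys_def by auto

lemma fl_0: "fl h p (0,0,0) = 1"
  using gsys_111[of h] by (simp add: fl_def lcm3_def)

lemma fl_nonneg: "prime p \<Longrightarrow> fl h p e \<ge> 0"
  by (cases e) (auto simp: fl_def gsys_nonneg)

lemma fl_le: "prime p \<Longrightarrow> fl h p e \<le> (1 / real p) ^ mx e"
proof -
  assume p: "prime p"
  obtain a b c where e: "e = (a,b,c)" by (cases e) auto
  have pos: "real p ^ mx e > 0" using p prime_gt_0_nat by simp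
  have "fl h p e = gsys h (p ^ a) (p ^ b) (p ^ c) / real p ^ mx e"
    by (simp add: fl_def e lcm3_pp)
  also have "\<dots> \<le> 1 / real p ^ mx e"
    using pos gsys_le1 by (simp add: divide_right_mono)
  finally show ?thesis by (simp add: power_one_over)
qed


lemma tele1:
  fixes \<psi> :: "nat \<Rightarrow> real"
  assumes "p > 0"
  shows "(\<Sum>a\<le>A. real p ^ a * (\<psi> a - (if a > 0 then \<psi> (a-1) / real p else 0))) = real p ^ A * \<psi> A"
proof (induction A)
  case 0 then show ?case by simp
next
  case (Suc A)
  have "(\<Sum>a\<le>Suc A. real p ^ a * (\<psi> a - (if a > 0 then \<psi> (a-1) / real p else 0)))
     = real p ^ A * \<psi> A + real p ^ Suc A * (\<psi> (Suc A) - \<psi> A / real p)"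
    using Suc by simp
  also have "\<dots> = real p ^ Suc A * \<psi> (Suc A)"
    using assms by (simp add: field_simps)
  finally show ?case .
qed

definition bx :: "nat \<times> nat \<times> nat \<Rightarrow> (nat \<times> nat \<times> nat) set" where
  "bx E = (case E of (A,B,C) \<Rightarrow> {..A} \<times> {..B} \<times> {..C})"

lemma finite_bx[simp]: "finite (bx E)"
  by (cases E) (simp add: bx_def)

lemma sum_bx: "(\<Sum>e\<in>bx (A,B,C). F e) = (\<Sum>a\<le>A. \<Sum>b\<le>B. \<Sum>c\<le>C. F (a,b,c))"
  by (simp add: bx_def sum.cartesian_product)

lemma box_tele:
  assumes "p > 0"
  shows "(\<Sum>e\<in>bx E. real p ^ tot e * kl h p e) = real p ^ tot E * fl h p E"
proof -
  obtain A B C where E: "E = (A,B,C)" by (cases E) auto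
  define \<phi>3 where "\<phi>3 = fl h p"
  define \<phi>2 where "\<phi>2 = S3 p \<phi>3"
  define \<phi>1 where "\<phi>1 = S2 p \<phi>2"
  have kl: "kl h p = S1 p \<phi>1" by (simp add: kl_def \<phi>1_def \<phi>2_def \<phi>3_def)
  define \<Psi> where "\<Psi> a = (\<Sum>b\<le>B. \<Sum>c\<le>C. real p ^ b * real p ^ c * \<phi>1 (a,b,c))" for a
  define \<Psi>2 where "\<Psi>2 b = (\<Sum>c\<le>C. real p ^ c * \<phi>2 (A,b,c))" for b
  have step1: "(\<Sum>b\<le>B. \<Sum>c\<le>C. real p ^ b * real p ^ c * S1 p \<phi>1 (a,b,c))
      = \<Psi> a - (if a > 0 then \<Psi> (a-1) / real p else 0)" for a
    by (cases "a > 0") (simp_all add: S1_def \<Psi>_def algebra_simps sum_subtractf sum_divide_distrib sum_distrib_left)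
  have step2: "(\<Sum>c\<le>C. real p ^ c * S2 p \<phi>2 (A,b,c))
      = \<Psi>2 b - (if b > 0 then \<Psi>2 (b-1) / real p else 0)" for b
    by (cases "b > 0") (simp_all add: S2_def \<Psi>2_def algebra_simps sum_subtractf sum_divide_distrib sum_distrib_left)
  have step3: "real p ^ c * S3 p \<phi>3 (A,B,c)
      = real p ^ c * (\<phi>3 (A,B,c) - (if c > 0 then \<phi>3 (A,B,c-1) / real p else 0))" for c
    by (simp add: S3_def)
  have "(\<Sum>e\<in>bx E. real p ^ tot e * kl h p e)
      = (\<Sum>a\<le>A. real p ^ a * (\<Sum>b\<le>B. \<Sum>c\<le>C. real p ^ b * real p ^ c * S1 p \<phi>1 (a,b,c)))"
    by (simp add: E sum_bx tot_def kl power_add sum_distrib_left mult.assoc)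
  also have "\<dots> = real p ^ A * \<Psi> A"
    by (simp only: step1 tele1[OF assms])
  also have "\<Psi> A = (\<Sum>b\<le>B. real p ^ b * (\<Sum>c\<le>C. real p ^ c * S2 p \<phi>2 (A,b,c)))"
    by (simp add: \<Psi>_def \<phi>1_def sum_distrib_left mult.assoc)
  also have "\<dots> = real p ^ B * \<Psi>2 B"
    by (simp only: step2 tele1[OF assms])
  also have "\<Psi>2 B = (\<Sum>c\<le>C. real p ^ c * S3 p \<phi>3 (A,B,c))"
    by (simp add: \<Psi>2_def \<phi>2_def)
  also have "\<dots> = real p ^ C * \<phi>3 (A,B,C)"
    using tele1[OF assms, of "\<lambda>c. \<phi>3 (A,B,c)" C] by (simp only: step3)
  finally show ?thesis
    by (simp add: E tot_def \<phi>3_def power_add mult.assoc)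
qed

lemma S1_bound:
  assumes p: "p \<ge> 1" and K: "K \<ge> 0" and b: "\<And>e. \<bar>\<phi> e\<bar> \<le> K * (1 / real p) ^ mx e"
  shows "\<bar>S1 p \<phi> e\<bar> \<le> 2 * K * (1 / real p) ^ mx e"
proof -
  obtain a b c where e: "e = (a,b,c)" by (cases e) auto
  define q where "q = 1 / real p"
  have q0: "0 < q" and q1: "q \<le> 1" using p by (auto simp: q_def)
  have sh: "\<bar>\<phi> (a-1,b,c) / real p\<bar> \<le> K * q ^ mx e" if "a > 0"
  proof -
    have "\<bar>\<phi> (a-1,b,c) / real p\<bar> = \<bar>\<phi> (a-1,b,c)\<bar> * q" using p by (simp add: q_def abs_div field_simps)
    also have "\<dots> \<le> K * q ^ mx (a-1,b,c) * q" using b[of "(a-1,b,c)"] p by (simp add: q_def divide_right_mono)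
    also have "\<dots> = K * q ^ (mx (a-1,b,c) + 1)" by simp
    also have "\<dots> \<le> K * q ^ mx e"
      using that K q0 q1 by (intro mult_left_mono power_decreasing) (auto simp: e mx_def)
    finally show ?thesis .
  qed
  have eq: "S1 p \<phi> e = \<phi> e - (if a > 0 then \<phi> (a-1,b,c) / real p else 0)"
    by (simp add: S1_def e)
  have sh2: "\<bar>if a > 0 then \<phi> (a-1,b,c) / real p else 0\<bar> \<le> K * q ^ mx e"
  proof (cases "a > 0")
    case True then show ?thesis using sh by simp
  next
    case False then show ?thesis using K q0 by simp
  qed
  have "\<bar>S1 p \<phi> e\<bar> \<le> \<bar>\<phi> e\<bar> + \<bar>if a > 0 then \<phi> (a-1,b,c) / real p else 0\<bar>"
    unfolding eq by (rule abs_triangle_ineq4)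
  also have "\<dots> \<le> K * q ^ mx e + K * q ^ mx e"
    using b[of e] sh2 unfolding q_def by (rule add_mono)
  finally show ?thesis unfolding q_def by linarith
qed

lemma S2_bound:
  assumes p: "p \<ge> 1" and K: "K \<ge> 0" and b: "\<And>e. \<bar>\<phi> e\<bar> \<le> K * (1 / real p) ^ mx e"
  shows "\<bar>S2 p \<phi> e\<bar> \<le> 2 * K * (1 / real p) ^ mx e"
proof -
  obtain a b c where e: "e = (a,b,c)" by (cases e) auto
  define q where "q = 1 / real p"
  have q0: "0 < q" and q1: "q \<le> 1" using p by (auto simp: q_def)
  have sh: "\<bar>\<phi> (a,b-1,c) / real p\<bar> \<le> K * q ^ mx e" if "b > 0"
  proof -
    have "\<bar>\<phi> (a,b-1,c) / real p\<bar> = \<bar>\<phi> (a,b-1,c)\<bar> * q" using p by (simp add: q_def abs_div field_simps)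
    also have "\<dots> \<le> K * q ^ mx (a,b-1,c) * q" using b[of "(a,b-1,c)"] p by (simp add: q_def divide_right_mono)
    also have "\<dots> = K * q ^ (mx (a,b-1,c) + 1)" by simp
    also have "\<dots> \<le> K * q ^ mx e"
      using that K q0 q1 by (intro mult_left_mono power_decreasing) (auto simp: e mx_def)
    finally show ?thesis .
  qed
  have eq: "S2 p \<phi> e = \<phi> e - (if b > 0 then \<phi> (a,b-1,c) / real p else 0)"
    by (simp add: S2_def e)
  have sh2: "\<bar>if b > 0 then \<phi> (a,b-1,c) / real p else 0\<bar> \<le> K * q ^ mx e"
  proof (cases "b > 0")
    case True then show ?thesis using sh by simp
  next
    case False then show ?thesis using K q0 by simp
  qed
  have "\<bar>S2 p \<phi> e\<bar> \<le> \<bar>\<phi> e\<bar> + \<bar>if b > 0 then \<phi> (a,b-1,c) / real p else 0\<bar>"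
    unfolding eq by (rule abs_triangle_ineq4)
  also have "\<dots> \<le> K * q ^ mx e + K * q ^ mx e"
    using b[of e] sh2 unfolding q_def by (rule add_mono)
  finally show ?thesis unfolding q_def by linarith
qed

lemma S3_bound:
  assumes p: "p \<ge> 1" and K: "K \<ge> 0" and b: "\<And>e. \<bar>\<phi> e\<bar> \<le> K * (1 / real p) ^ mx e"
  shows "\<bar>S3 p \<phi> e\<bar> \<le> 2 * K * (1 / real p) ^ mx e"
proof -
  obtain a b c where e: "e = (a,b,c)" by (cases e) auto
  define q where "q = 1 / real p"
  have q0: "0 < q" and q1: "q \<le> 1" using p by (auto simp: q_def)
  have sh: "\<bar>\<phi> (a,b,c-1) / real p\<bar> \<le> K * q ^ mx e" if "c > 0"
  proof -
    have "\<bar>\<phi> (a,b,c-1) / real p\<bar> = \<bar>\<phi> (a,b,c-1)\<bar> * q" using p by (simp add: q_def abs_div field_simps)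
    also have "\<dots> \<le> K * q ^ mx (a,b,c-1) * q" using b[of "(a,b,c-1)"] p by (simp add: q_def divide_right_mono)
    also have "\<dots> = K * q ^ (mx (a,b,c-1) + 1)" by simp
    also have "\<dots> \<le> K * q ^ mx e"
      using that K q0 q1 by (intro mult_left_mono power_decreasing) (auto simp: e mx_def)
    finally show ?thesis .
  qed
  have eq: "S3 p \<phi> e = \<phi> e - (if c > 0 then \<phi> (a,b,c-1) / real p else 0)"
    by (simp add: S3_def e)
  have sh2: "\<bar>if c > 0 then \<phi> (a,b,c-1) / real p else 0\<bar> \<le> K * q ^ mx e"
  proof (cases "c > 0")
    case True then show ?thesis using sh by simp
  next
    case False then show ?thesis using K q0 by simp
  qed
  have "\<bar>S3 p \<phi> e\<bar> \<le> \<bar>\<phi> e\<bar> + \<bar>if c > 0 then \<phi> (a,b,c-1) / real p else 0\<bar>"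
    unfolding eq by (rule abs_triangle_ineq4)
  also have "\<dots> \<le> K * q ^ mx e + K * q ^ mx e"
    using b[of e] sh2 unfolding q_def by (rule add_mono)
  finally show ?thesis unfolding q_def by linarith
qed

lemma fl_abs_le: "prime p \<Longrightarrow> \<bar>fl h p e\<bar> \<le> 1 * (1 / real p) ^ mx e"
  using fl_le fl_nonneg by simp

lemma S3fl_bound: "prime p \<Longrightarrow> \<bar>S3 p (fl h p) e\<bar> \<le> 2 * (1 / real p) ^ mx e"
  using S3_bound[of p 1 "fl h p" e] fl_abs_le[of p h] prime_ge_1_nat by simp

lemma S23fl_bound: "prime p \<Longrightarrow> \<bar>S2 p (S3 p (fl h p)) e\<bar> \<le> 4 * (1 / real p) ^ mx e"
  using S2_bound[of p 2 "S3 p (fl h p)" e] S3fl_bound[of p h] prime_ge_1_nat by simp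

lemma kl_bound: "prime p \<Longrightarrow> \<bar>kl h p e\<bar> \<le> 8 * (1 / real p) ^ mx e"
  using S1_bound[of p 4 "S2 p (S3 p (fl h p))" e] S23fl_bound[of p h] prime_ge_1_nat
  by (simp add: kl_def)

lemma tot_le_mx: "tot e \<le> 3 * mx e"
proof -
  obtain a b c where "e = (a,b,c)" by (cases e) auto
  then show ?thesis by (simp add: tot_def mx_def)
qed

lemma geo3_summable:
  fixes s :: real
  assumes "0 \<le> s" "s < 1"
  shows "(\<lambda>e. s ^ tot e) summable_on UNIV"
proof (rule nonneg_bdd_above_summable_on)
  show "\<And>x. x \<in> UNIV \<Longrightarrow> 0 \<le> s ^ tot x" using assms by simp
  have gs: "(\<Sum>a\<le>n. s ^ a) \<le> 1 / (1 - s)" for n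
  proof -
    have "(\<Sum>a\<le>n. s ^ a) \<le> suminf (\<lambda>a. s ^ a)"
      using assms by (intro sum_le_suminf summable_geometric) auto
    also have "\<dots> = 1 / (1 - s)" using assms by (simp add: suminf_geometric)
    finally show ?thesis .
  qed
  have gs0: "0 \<le> (\<Sum>a\<le>n. s ^ a)" for n using assms by (simp add: sum_nonneg)
  show "bdd_above (sum (\<lambda>e. s ^ tot e) ` {F. F \<subseteq> UNIV \<and> finite F})"
  proof (rule bdd_aboveI2)
    fix F :: "(nat \<times> nat \<times> nat) set" assume "F \<in> {F. F \<subseteq> UNIV \<and> finite F}"
    then have fin: "finite F" by simp
    define n where "n = (\<Sum>e\<in>F. tot e)"
    have sub: "F \<subseteq> bx (n,n,n)"
    proof
      fix e assume eF: "e \<in> F"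
      have "tot e \<le> n" unfolding n_def by (rule member_le_sum) (use fin eF in auto)
      then show "e \<in> bx (n,n,n)" by (cases e) (auto simp: bx_def tot_def)
    qed
    have "sum (\<lambda>e. s ^ tot e) F \<le> sum (\<lambda>e. s ^ tot e) (bx (n,n,n))"
      using sub assms by (intro sum_mono2) auto
    also have "\<dots> = (\<Sum>a\<le>n. s ^ a * (\<Sum>b\<le>n. s ^ b * (\<Sum>c\<le>n. s ^ c)))"
      by (simp add: sum_bx tot_def power_add mult.assoc sum_distrib_left)
    also have "\<dots> = (\<Sum>a\<le>n. s ^ a) * ((\<Sum>a\<le>n. s ^ a) * (\<Sum>a\<le>n. s ^ a))"
      by (simp only: sum_distrib_right[symmetric])
    also have "\<dots> \<le> (1 / (1 - s)) * ((1 / (1 - s)) * (1 / (1 - s)))"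
      using gs gs0 assms by (intro mult_mono) (auto intro: mult_nonneg_nonneg)
    finally show "sum (\<lambda>e. s ^ tot e) F \<le> (1 / (1 - s)) * ((1 / (1 - s)) * (1 / (1 - s)))" .
  qed
qed

lemma weight_bound:
  fixes p :: nat
  assumes "p \<ge> 2"
  shows "(1 / real p) ^ mx e * (real p powr (1/4)) ^ tot e \<le> (real p powr (-1/12)) ^ tot e"
proof -
  have p0: "real p > 0" using assms by simp
  have "(1 / real p) ^ mx e = real p powr (- real (mx e))"
    using p0 by (simp add: powr_minus powr_realpow power_one_over divide_inverse power_inverse)
  moreover have "(real p powr (1/4)) ^ tot e = real p powr (real (tot e) * (1/4))"
    using p0 by (simp add: powr_power)
  moreover have "(real p powr (-1/12)) ^ tot e = real p powr (real (tot e) * (-1/12))"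
    using p0 by (simp add: powr_power)
  moreover have "- real (mx e) + real (tot e) * (1/4) \<le> real (tot e) * (-1/12)"
    using tot_le_mx[of e] by linarith
  ultimately show ?thesis
  proof -
    assume e1: "(1 / real p) ^ mx e = real p powr (- real (mx e))"
      and e2: "(real p powr (1/4)) ^ tot e = real p powr (real (tot e) * (1/4))"
      and e3: "(real p powr (-1/12)) ^ tot e = real p powr (real (tot e) * (-1/12))"
      and le: "- real (mx e) + real (tot e) * (1/4) \<le> real (tot e) * (-1/12)"
    have "(1 / real p) ^ mx e * (real p powr (1/4)) ^ tot e = real p powr (- real (mx e) + real (tot e) * (1/4))"
      unfolding e1 e2 powr_add by simp
    also have "\<dots> \<le> real p powr (real (tot e) * (-1/12))"
      by (rule powr_mono[OF le]) (use assms in simp)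
    finally show ?thesis unfolding e3 .
  qed
qed

lemma bounded_mx_summable:
  fixes \<phi> :: "nat \<times> nat \<times> nat \<Rightarrow> real"
  assumes p: "p \<ge> 2" and b: "\<And>e. \<bar>\<phi> e\<bar> \<le> K * (1 / real p) ^ mx e"
  shows "(\<lambda>e. \<bar>\<phi> e\<bar> * (real p powr (1/4)) ^ tot e) summable_on UNIV"
proof -
  have K: "K \<ge> 0" using b[of "(0,0,0)"] by (simp add: mx_def)
  have s1: "real p powr (-1/12) < 1" using p by (intro powr_less_one) auto
  have sm: "(\<lambda>e. K * (real p powr (-1/12)) ^ tot e) summable_on UNIV"
    by (rule summable_on_cmult_right[OF geo3_summable]) (use s1 in auto)
  have le: "\<bar>\<phi> e\<bar> * (real p powr (1/4)) ^ tot e \<le> K * (real p powr (-1/12)) ^ tot e" for e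
  proof -
    have "\<bar>\<phi> e\<bar> * (real p powr (1/4)) ^ tot e \<le> K * (1 / real p) ^ mx e * (real p powr (1/4)) ^ tot e"
      by (rule mult_right_mono[OF b]) simp
    also have "\<dots> \<le> K * (real p powr (-1/12)) ^ tot e"
      unfolding mult.assoc by (rule mult_left_mono[OF weight_bound[OF p] K])
    finally show ?thesis .
  qed
  have nn: "0 \<le> \<bar>\<phi> e\<bar> * (real p powr (1/4)) ^ tot e" for e
    by simp
  show ?thesis
    by (rule summable_on_comparison_test[OF sm], rule le, rule nn)
qed

lemma bounded_mx_summable':
  fixes \<phi> :: "nat \<times> nat \<times> nat \<Rightarrow> real"
  assumes p: "p \<ge> 2" and b: "\<And>e. \<bar>\<phi> e\<bar> \<le> K * (1 / real p) ^ mx e"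
  shows "\<phi> summable_on UNIV"
proof -
  have le: "\<bar>\<phi> e\<bar> \<le> \<bar>\<phi> e\<bar> * (real p powr (1/4)) ^ tot e" for e
  proof -
    have "1 \<le> real p powr (1/4)"
      by (rule ge_one_powr_ge_zero) (use p in simp_all)
    then have "1 \<le> (real p powr (1/4)) ^ tot e"
      by (rule one_le_power)
    from mult_left_mono[OF this abs_ge_zero[of "\<phi> e"]] show ?thesis by simp
  qed
  have "(\<lambda>e. \<bar>\<phi> e\<bar>) summable_on UNIV"
    by (rule summable_on_comparison_test[OF bounded_mx_summable[OF assms]], rule le, rule abs_ge_zero)
  then show ?thesis using summable_on_iff_abs_summable_on_real[of \<phi> UNIV] by simp
qed

lemma S1_has_sum:
  assumes "(\<phi> has_sum s) UNIV"
  shows "(S1 p \<phi> has_sum ((1 - 1 / real p) * s)) UNIV"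
proof -
  define \<psi> where "\<psi> = (\<lambda>(a::nat,b::nat,c::nat). if a > 0 then \<phi> (a-1,b,c) else 0)"
  define \<sigma> where "\<sigma> = (\<lambda>(a::nat,b::nat,c::nat). (Suc a, b, c))"
  have inj: "inj \<sigma>" unfolding \<sigma>_def by (auto simp: inj_def)
  have comp: "\<psi> \<circ> \<sigma> = \<phi>" by (auto simp: \<psi>_def \<sigma>_def fun_eq_iff)
  have "(\<psi> has_sum s) (range \<sigma>)"
    using has_sum_reindex[OF inj, of \<psi> s] assms comp by simp
  moreover have "x \<notin> range \<sigma> \<Longrightarrow> \<psi> x = 0" for x
    by (cases x) (auto simp: \<psi>_def \<sigma>_def image_iff gr0_conv_Suc)
  ultimately have "(\<psi> has_sum s) UNIV"
    using has_sum_cong_neutral[of UNIV "range \<sigma>" \<psi> \<psi> s] by auto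
  then have "((\<lambda>e. \<phi> e + (- (1 / real p)) * \<psi> e) has_sum (s + (- (1 / real p)) * s)) UNIV"
    by (intro has_sum_add assms has_sum_cmult_right)
  moreover have "(\<lambda>e. \<phi> e + (- (1 / real p)) * \<psi> e) = S1 p \<phi>"
    by (auto simp: fun_eq_iff S1_def \<psi>_def)
  ultimately show ?thesis by (simp add: algebra_simps)
qed

lemma S2_has_sum:
  assumes "(\<phi> has_sum s) UNIV"
  shows "(S2 p \<phi> has_sum ((1 - 1 / real p) * s)) UNIV"
proof -
  define \<psi> where "\<psi> = (\<lambda>(a::nat,b::nat,c::nat). if b > 0 then \<phi> (a,b-1,c) else 0)"
  define \<sigma> where "\<sigma> = (\<lambda>(a::nat,b::nat,c::nat). (a, Suc b, c))"
  have inj: "inj \<sigma>" unfolding \<sigma>_def by (auto simp: inj_def)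
  have comp: "\<psi> \<circ> \<sigma> = \<phi>" by (auto simp: \<psi>_def \<sigma>_def fun_eq_iff)
  have "(\<psi> has_sum s) (range \<sigma>)"
    using has_sum_reindex[OF inj, of \<psi> s] assms comp by simp
  moreover have "x \<notin> range \<sigma> \<Longrightarrow> \<psi> x = 0" for x
    by (cases x) (auto simp: \<psi>_def \<sigma>_def image_iff gr0_conv_Suc)
  ultimately have "(\<psi> has_sum s) UNIV"
    using has_sum_cong_neutral[of UNIV "range \<sigma>" \<psi> \<psi> s] by auto
  then have "((\<lambda>e. \<phi> e + (- (1 / real p)) * \<psi> e) has_sum (s + (- (1 / real p)) * s)) UNIV"
    by (intro has_sum_add assms has_sum_cmult_right)
  moreover have "(\<lambda>e. \<phi> e + (- (1 / real p)) * \<psi> e) = S2 p \<phi>"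
    by (auto simp: fun_eq_iff S2_def \<psi>_def)
  ultimately show ?thesis by (simp add: algebra_simps)
qed

lemma S3_has_sum:
  assumes "(\<phi> has_sum s) UNIV"
  shows "(S3 p \<phi> has_sum ((1 - 1 / real p) * s)) UNIV"
proof -
  define \<psi> where "\<psi> = (\<lambda>(a::nat,b::nat,c::nat). if c > 0 then \<phi> (a,b,c-1) else 0)"
  define \<sigma> where "\<sigma> = (\<lambda>(a::nat,b::nat,c::nat). (a, b, Suc c))"
  have inj: "inj \<sigma>" unfolding \<sigma>_def by (auto simp: inj_def)
  have comp: "\<psi> \<circ> \<sigma> = \<phi>" by (auto simp: \<psi>_def \<sigma>_def fun_eq_iff)
  have "(\<psi> has_sum s) (range \<sigma>)"
    using has_sum_reindex[OF inj, of \<psi> s] assms comp by simp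
  moreover have "x \<notin> range \<sigma> \<Longrightarrow> \<psi> x = 0" for x
    by (cases x) (auto simp: \<psi>_def \<sigma>_def image_iff gr0_conv_Suc)
  ultimately have "(\<psi> has_sum s) UNIV"
    using has_sum_cong_neutral[of UNIV "range \<sigma>" \<psi> \<psi> s] by auto
  then have "((\<lambda>e. \<phi> e + (- (1 / real p)) * \<psi> e) has_sum (s + (- (1 / real p)) * s)) UNIV"
    by (intro has_sum_add assms has_sum_cmult_right)
  moreover have "(\<lambda>e. \<phi> e + (- (1 / real p)) * \<psi> e) = S3 p \<phi>"
    by (auto simp: fun_eq_iff S3_def \<psi>_def)
  ultimately show ?thesis by (simp add: algebra_simps)
qed

lemma fl_summable:
  assumes p: "prime p" shows "fl h p summable_on UNIV"
proof -
  have "\<And>e. \<bar>fl h p e\<bar> \<le> 1 * (1 / real p) ^ mx e" using fl_abs_le[OF p] by blast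
  then show ?thesis by (rule bounded_mx_summable'[OF prime_ge_2_nat[OF p]])
qed

lemma local_sum_fl: "local_sum h p = infsum (fl h p) UNIV"
  by (simp add: local_sum_def fl_def)

lemma kl_has_sum:
  assumes "prime p"
  shows "(kl h p has_sum ((1 - 1 / real p) ^ 3 * local_sum h p)) UNIV"
proof -
  have "(fl h p has_sum local_sum h p) UNIV"
    using fl_summable[OF assms] by (simp add: local_sum_fl)
  then have "(S3 p (fl h p) has_sum ((1 - 1 / real p) * local_sum h p)) UNIV"
    by (rule S3_has_sum)
  then have "(S2 p (S3 p (fl h p)) has_sum ((1 - 1 / real p) * ((1 - 1 / real p) * local_sum h p))) UNIV"
    by (rule S2_has_sum)
  then have "(S1 p (S2 p (S3 p (fl h p))) has_sum ((1 - 1 / real p) * ((1 - 1 / real p) * ((1 - 1 / real p) * local_sum h p)))) UNIV"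
    by (rule S1_has_sum)
  then show ?thesis unfolding kl_def
    by (simp add: power3_eq_cube mult.assoc)
qed

lemma gsys_explicit:
  assumes p: "prime p" and nd: "\<not> p dvd 2 * h"
  shows "gsys h (p ^ a) (p ^ b) (p ^ c) = (if (a = 0 \<and> b = 0) \<or> (a = 0 \<and> c = 0) \<or> (b = 0 \<and> c = 0) then 1 else 0)"
proof (cases "(a = 0 \<and> b = 0) \<or> (a = 0 \<and> c = 0) \<or> (b = 0 \<and> c = 0)")
  case True
  then consider "a = 0" "b = 0" | "a = 0" "c = 0" | "b = 0" "c = 0" by blast
  then have "\<exists>n::int. [n = - int h] (mod int (p ^ a)) \<and> [n = 0] (mod int (p ^ b)) \<and> [n = int h] (mod int (p ^ c))"
  proof cases
    case 1 then show ?thesis by (intro exI[of _ "int h"]) simp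
  next
    case 2 then show ?thesis by (intro exI[of _ "0"]) simp
  next
    case 3 then show ?thesis by (intro exI[of _ "- int h"]) simp
  qed
  then show ?thesis using True by (simp add: gsys_def)
next
  case False
  have "\<not> (\<exists>n::int. [n = - int h] (mod int (p ^ a)) \<and> [n = 0] (mod int (p ^ b)) \<and> [n = int h] (mod int (p ^ c)))"
  proof
    assume "\<exists>n::int. [n = - int h] (mod int (p ^ a)) \<and> [n = 0] (mod int (p ^ b)) \<and> [n = int h] (mod int (p ^ c))"
    then obtain n :: int where n1: "[n = - int h] (mod int (p ^ a))" and n2: "[n = 0] (mod int (p ^ b))"
      and n3: "[n = int h] (mod int (p ^ c))" by blast
    have dv: "int p dvd int (p ^ k)" if "k > 0" for k
      using that by (simp add: dvd_power)
    have d1: "a > 0 \<Longrightarrow> int p dvd n + int h"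
      using cong_dvd_modulus[OF n1 dv] by (simp add: cong_iff_dvd_diff)
    have d2: "b > 0 \<Longrightarrow> int p dvd n"
      using cong_dvd_modulus[OF n2 dv] by (simp add: cong_iff_dvd_diff)
    have d3: "c > 0 \<Longrightarrow> int p dvd n - int h"
      using cong_dvd_modulus[OF n3 dv] by (simp add: cong_iff_dvd_diff)
    have ndi: "\<not> int p dvd 2 * int h" using nd int_dvd_int_iff[of p "2*h"] by simp
    have ndh: "\<not> int p dvd int h" using ndi by (metis dvd_mult)
    from False consider "a > 0" "b > 0" | "a > 0" "c > 0" | "b > 0" "c > 0" by auto
    then show False
    proof cases
      case 1
      have "int p dvd (n + int h) - n" using dvd_diff[OF d1[OF 1(1)] d2[OF 1(2)]] .
      then show False using ndh by simp
    next
      case 2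
      have "int p dvd (n + int h) - (n - int h)" using dvd_diff[OF d1[OF 2(1)] d3[OF 2(2)]] .
      then have "int p dvd 2 * int h" by (simp add: algebra_simps)
      then show False using ndi by simp
    next
      case 3
      have "int p dvd n - (n - int h)" using dvd_diff[OF d2[OF 3(1)] d3[OF 3(2)]] .
      then show False using ndh by simp
    qed
  qed
  then show ?thesis using False by (simp add: gsys_def)
qed

lemma fl_explicit:
  assumes p: "prime p" and nd: "\<not> p dvd 2 * h"
  shows "fl h p (a,b,c) = (if (a = 0 \<and> b = 0) \<or> (a = 0 \<and> c = 0) \<or> (b = 0 \<and> c = 0) then inverse (real p) ^ (a+b+c) else 0)"
proof -
  have "fl h p (a,b,c) = gsys h (p ^ a) (p ^ b) (p ^ c) / real p ^ mx (a,b,c)"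
    by (simp add: fl_def lcm3_pp)
  also have "\<dots> = (if (a = 0 \<and> b = 0) \<or> (a = 0 \<and> c = 0) \<or> (b = 0 \<and> c = 0) then inverse (real p) ^ (a+b+c) else 0)"
    by (auto simp: gsys_explicit[OF p nd] mx_def power_inverse divide_inverse)
  finally show ?thesis .
qed

lemma kl_explicit:
  assumes p: "prime p" and nd: "\<not> p dvd 2 * h"
  shows "kl h p (a,b,c) = (if (a,b,c) = (0,0,0) then 1
            else if (a,b,c) \<in> {(1,1,0),(1,0,1),(0,1,1)} then - (inverse (real p) ^ 2)
            else if (a,b,c) = (1,1,1) then 2 * inverse (real p) ^ 3 else 0)"
proof -
  have ca: "a = 0 \<or> a = 1 \<or> (\<exists>a'. a = Suc (Suc a'))" by presburger
  have cb: "b = 0 \<or> b = 1 \<or> (\<exists>b'. b = Suc (Suc b'))" by presburger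
  have cc: "c = 0 \<or> c = 1 \<or> (\<exists>c'. c = Suc (Suc c'))" by presburger
  note defs = kl_def S1_def S2_def S3_def fl_explicit[OF p nd] divide_inverse power3_eq_cube power2_eq_square
  show ?thesis
    using ca cb cc
    by (elim disjE exE) (simp_all add: defs)
qed

definition Zs :: "(nat \<times> nat \<times> nat) set" where
  "Zs = {(0,0,0),(1,1,0),(1,0,1),(0,1,1),(1,1,1)}"

lemma finite_Zs[simp]: "finite Zs" by (simp add: Zs_def)

lemma kl_zero_off:
  assumes p: "prime p" and nd: "\<not> p dvd 2 * h" and e: "e \<notin> Zs"
  shows "kl h p e = 0"
proof -
  obtain a b c where ee: "e = (a,b,c)" by (cases e) auto
  show ?thesis using e unfolding ee by (subst kl_explicit[OF p nd]) (auto simp: Zs_def)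
qed

lemma kl_sum_Zs:
  assumes p: "prime p" and nd: "\<not> p dvd 2 * h"
  shows "(\<Sum>e\<in>Zs. kl h p e) = (1 - 1 / real p)^2 * (1 + 2 / real p)"
proof -
  have p0: "real p > 0" using p by (simp add: prime_gt_0_nat)
  have "(\<Sum>e\<in>Zs. kl h p e) = 1 - 3 * inverse (real p) ^ 2 + 2 * inverse (real p) ^ 3"
    by (simp add: Zs_def kl_explicit[OF p nd])
  also have "\<dots> = (1 - 1 / real p)^2 * (1 + 2 / real p)"
    using p0 by (simp add: field_simps power2_eq_square power3_eq_cube)
  finally show ?thesis .
qed

lemma kl_has_sum_good:
  assumes p: "prime p" and nd: "\<not> p dvd 2 * h"
  shows "(kl h p has_sum ((1 - 1 / real p)^2 * (1 + 2 / real p))) UNIV"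
proof -
  have "(kl h p has_sum (\<Sum>e\<in>Zs. kl h p e)) Zs" by (rule has_sum_finiteI) auto
  moreover have "(kl h p has_sum X) Zs \<longleftrightarrow> (kl h p has_sum X) UNIV" for X
    by (rule has_sum_cong_neutral) (use kl_zero_off[OF p nd] in auto)
  ultimately have "(kl h p has_sum (\<Sum>e\<in>Zs. kl h p e)) UNIV" by blast
  then show ?thesis using kl_sum_Zs[OF p nd] by simp
qed

lemma good_weight_bound:
  assumes p: "prime p" and nd: "\<not> p dvd 2 * h" and G: "finite G"
  shows "(\<Sum>e\<in>G. \<bar>kl h p e\<bar> * (real p powr (1/4)) ^ tot e) \<le> 1 + 5 * real p powr (-3/2)"
proof -
  define P where "P = real p"
  have P1: "P \<ge> 1" using prime_ge_1_nat[OF p] by (simp add: P_def)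
  have P0: "P > 0" using P1 by simp
  have i2: "inverse P ^ 2 = P powr (-2)"
  proof -
    have "P powr 2 = P ^ 2" using powr_realpow[OF P0, of 2] by simp
    then show ?thesis by (simp add: powr_minus power_inverse)
  qed
  have i3: "inverse P ^ 3 = P powr (-3)"
  proof -
    have "P powr 3 = P ^ 3" using powr_realpow[OF P0, of 3] by simp
    then show ?thesis by (simp add: powr_minus power_inverse)
  qed
  have o2: "(P powr (1/4)) ^ 2 = P powr (1/2)"
    using powr_power[of P "1/4" 2] P0 by simp
  have o3: "(P powr (1/4)) ^ 3 = P powr (3/4)"
    using powr_power[of P "1/4" 3] P0 by simp
  have w2: "inverse P ^ 2 * (P powr (1/4)) ^ 2 = P powr (-3/2)"
    unfolding i2 o2 powr_add[symmetric] by simp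
  have w3: "inverse P ^ 3 * (P powr (1/4)) ^ 3 \<le> P powr (-3/2)"
  proof -
    have "inverse P ^ 3 * (P powr (1/4)) ^ 3 = P powr (-9/4)"
      unfolding i3 o3 powr_add[symmetric] by simp
    also have "\<dots> \<le> P powr (-3/2)" by (rule powr_mono) (use P1 in auto)
    finally show ?thesis .
  qed
  have nn: "0 \<le> \<bar>kl h p e\<bar> * (real p powr (1/4)) ^ tot e" for e by simp
  have "(\<Sum>e\<in>G. \<bar>kl h p e\<bar> * (real p powr (1/4)) ^ tot e) = (\<Sum>e\<in>G \<inter> Zs. \<bar>kl h p e\<bar> * (real p powr (1/4)) ^ tot e)"
    using G kl_zero_off[OF p nd] by (intro sum.mono_neutral_right) auto
  also have "\<dots> \<le> (\<Sum>e\<in>Zs. \<bar>kl h p e\<bar> * (real p powr (1/4)) ^ tot e)"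
    by (rule sum_mono2) (auto simp: nn)
  also have "(\<Sum>e\<in>Zs. \<bar>kl h p e\<bar> * (real p powr (1/4)) ^ tot e) = 1 + 3 * (inverse P ^ 2 * (P powr (1/4)) ^ 2) + 2 * (inverse P ^ 3 * (P powr (1/4)) ^ 3)"
    unfolding P_def by (simp add: Zs_def kl_explicit[OF p nd] tot_def power2_eq_square power3_eq_cube mult_ac)
  also have "\<dots> \<le> 1 + 3 * P powr (-3/2) + 2 * P powr (-3/2)"
    using w2 w3 by simp
  finally show ?thesis by (simp add: P_def)
qed

type_synonym trip = "nat \<times> nat \<times> nat"

definition vp :: "nat \<Rightarrow> trip \<Rightarrow> trip" where
  "vp p d = (multiplicity p (fst d), multiplicity p (fst (snd d)), multiplicity p (snd (snd d)))"
definition DD :: "trip \<Rightarrow> nat" where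
  "DD d = fst d * fst (snd d) * snd (snd d)"
definition PF :: "trip \<Rightarrow> nat set" where
  "PF d = prime_factors (DD d)"
definition P3 :: "trip set" where
  "P3 = {d. fst d > 0 \<and> fst (snd d) > 0 \<and> snd (snd d) > 0}"
definition tr :: "nat set \<Rightarrow> (nat \<Rightarrow> trip) \<Rightarrow> trip" where
  "tr S e = ((\<Prod>p\<in>S. p ^ fst (e p)), (\<Prod>p\<in>S. p ^ fst (snd (e p))), (\<Prod>p\<in>S. p ^ snd (snd (e p))))"
definition Smooth :: "nat set \<Rightarrow> trip set" where
  "Smooth S = {d \<in> P3. PF d \<subseteq> S}"
definition kap :: "nat \<Rightarrow> trip \<Rightarrow> real" where
  "kap h d = (\<Prod>p\<in>PF d. kl h p (vp p d))"
definition Dv :: "trip \<Rightarrow> trip set" where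
  "Dv u = {d. fst d dvd fst u \<and> fst (snd d) dvd fst (snd u) \<and> snd (snd d) dvd snd (snd u)}"

definition primeset :: "nat set \<Rightarrow> bool" where
  "primeset S \<longleftrightarrow> finite S \<and> (\<forall>p\<in>S. prime p)"

lemma prod_pp_pos: "primeset S \<Longrightarrow> (\<Prod>p\<in>S. p ^ f p) > (0::nat)"
  unfolding primeset_def by (auto intro!: prod_pos simp: prime_gt_0_nat)

lemma mult_prod_pp:
  "primeset S \<Longrightarrow> prime q \<Longrightarrow> multiplicity q (\<Prod>p\<in>S. p ^ f p) = (if q \<in> S then f q else 0)"
  unfolding primeset_def by (rule multiplicity_prod_prime_powers) auto

lemma vp_tr: "primeset S \<Longrightarrow> prime q \<Longrightarrow> vp q (tr S e) = (if q \<in> S then e q else (0,0,0))"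
  by (simp add: vp_def tr_def mult_prod_pp)

lemma tr_P3: "primeset S \<Longrightarrow> tr S e \<in> P3"
  by (simp add: tr_def P3_def prod_pp_pos)

lemma P3_DD: "d \<in> P3 \<Longrightarrow> DD d > 0"
  by (auto simp: P3_def DD_def)

lemma mult_DD:
  assumes "d \<in> P3" "prime q"
  shows "multiplicity q (DD d) = multiplicity q (fst d) + multiplicity q (fst (snd d)) + multiplicity q (snd (snd d))"
  using assms by (auto simp: P3_def DD_def prime_elem_multiplicity_mult_distrib)

lemma PF_iff:
  assumes "d \<in> P3"
  shows "q \<in> PF d \<longleftrightarrow> prime q \<and> vp q d \<noteq> (0,0,0)"
proof -
  have "q \<in> PF d \<longleftrightarrow> prime q \<and> multiplicity q (DD d) > 0"
    by (simp add: PF_def prime_factors_multiplicity)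
  also have "\<dots> \<longleftrightarrow> prime q \<and> vp q d \<noteq> (0,0,0)"
  proof (cases "prime q")
    case True
    then show ?thesis using mult_DD[OF assms True] by (simp add: vp_def)
  qed simp
  finally show ?thesis .
qed

lemma vp_notin_PF: "d \<in> P3 \<Longrightarrow> prime q \<Longrightarrow> q \<notin> PF d \<Longrightarrow> vp q d = (0,0,0)"
  using PF_iff by blast

lemma PF_tr:
  assumes S: "primeset S" shows "PF (tr S e) \<subseteq> S"
proof
  fix q assume "q \<in> PF (tr S e)"
  then have q: "prime q" "vp q (tr S e) \<noteq> (0,0,0)" using PF_iff[OF tr_P3[OF S]] by blast+
  show "q \<in> S"
  proof (rule ccontr)
    assume "q \<notin> S"
    then show False using q vp_tr[OF S q(1), of e] by simp
  qed
qed

lemma finite_PF: "finite (PF d)"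
  by (simp add: PF_def)

lemma primeset_PF: "primeset (PF d)"
  by (auto simp: primeset_def PF_def in_prime_factors_iff)

lemma prod_mult_eq:
  assumes S: "primeset S" and x: "x > 0" and sub: "\<And>q. prime q \<Longrightarrow> q dvd x \<Longrightarrow> q \<in> S"
  shows "(\<Prod>p\<in>S. p ^ multiplicity p x) = (x::nat)"
proof -
  have "normalize (\<Prod>p\<in>S. p ^ multiplicity p x) = normalize x"
  proof (rule multiplicity_eq_imp_eq)
    show "(\<Prod>p\<in>S. p ^ multiplicity p x) \<noteq> 0" using prod_pp_pos[OF S] by (metis not_less0)
    show "x \<noteq> 0" using x by simp
    fix q :: nat assume q: "prime q"
    show "multiplicity q (\<Prod>p\<in>S. p ^ multiplicity p x) = multiplicity q x"
      using mult_prod_pp[OF S q] sub[OF q] not_dvd_imp_multiplicity_0 by auto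
  qed
  then show ?thesis by simp
qed

lemma dvd_DD:
  assumes "d \<in> P3" "prime q"
  shows "q dvd fst d \<Longrightarrow> q \<in> PF d" and "q dvd fst (snd d) \<Longrightarrow> q \<in> PF d" and "q dvd snd (snd d) \<Longrightarrow> q \<in> PF d"
  using assms by (auto simp: PF_def in_prime_factors_iff P3_def DD_def)

lemma tr_vp:
  assumes S: "primeset S" and d: "d \<in> P3" and sub: "PF d \<subseteq> S"
  shows "tr S (\<lambda>p. vp p d) = d"
proof -
  obtain a b c where dd: "d = (a,b,c)" by (cases d) auto
  have pos: "a > 0" "b > 0" "c > 0" using d by (auto simp: dd P3_def)
  have "(\<Prod>p\<in>S. p ^ multiplicity p a) = a"
    using dvd_DD(1)[OF d] sub by (intro prod_mult_eq[OF S pos(1)]) (auto simp: dd)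
  moreover have "(\<Prod>p\<in>S. p ^ multiplicity p b) = b"
    using dvd_DD(2)[OF d] sub by (intro prod_mult_eq[OF S pos(2)]) (auto simp: dd)
  moreover have "(\<Prod>p\<in>S. p ^ multiplicity p c) = c"
    using dvd_DD(3)[OF d] sub by (intro prod_mult_eq[OF S pos(3)]) (auto simp: dd)
  ultimately show ?thesis by (simp add: tr_def vp_def dd)
qed

lemma tr_cong: "(\<And>p. p \<in> S \<Longrightarrow> e p = e' p) \<Longrightarrow> tr S e = tr S e'"
  unfolding tr_def by (metis (no_types, lifting) prod.cong)

lemma inj_tr: "primeset S \<Longrightarrow> inj_on (tr S) (PiE S B)"
proof (rule inj_onI)
  fix e e' assume S: "primeset S" and e: "e \<in> PiE S B" and e': "e' \<in> PiE S B" and eq: "tr S e = tr S e'"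
  show "e = e'"
  proof (rule ext)
    fix p show "e p = e' p"
    proof (cases "p \<in> S")
      case True
      then have pp: "prime p" using S by (auto simp: primeset_def)
      have "e p = vp p (tr S e)" using vp_tr[OF S pp, of e] True by simp
      also have "\<dots> = vp p (tr S e')" by (simp only: eq)
      also have "\<dots> = e' p" using vp_tr[OF S pp, of e'] True by simp
      finally show ?thesis .
    next
      case False then show ?thesis using PiE_arb[OF e False] PiE_arb[OF e' False] by (simp only:)
    qed
  qed
qed

lemma bij_tr_smooth:
  assumes S: "primeset S"
  shows "bij_betw (tr S) (PiE S (\<lambda>_. UNIV)) (Smooth S)"
proof (rule bij_betw_imageI)
  show "inj_on (tr S) (PiE S (\<lambda>_. UNIV))" by (rule inj_tr[OF S])
  show "tr S ` PiE S (\<lambda>_. UNIV) = Smooth S"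
  proof
    show "tr S ` PiE S (\<lambda>_. UNIV) \<subseteq> Smooth S"
      using tr_P3[OF S] PF_tr[OF S] unfolding Smooth_def by blast
    show "Smooth S \<subseteq> tr S ` PiE S (\<lambda>_. UNIV)"
    proof
      fix d assume "d \<in> Smooth S"
      then have d: "d \<in> P3" and sub: "PF d \<subseteq> S" by (auto simp: Smooth_def)
      have "d = tr S (restrict (\<lambda>p. vp p d) S)"
        using tr_vp[OF S d sub] tr_cong[of S "restrict (\<lambda>p. vp p d) S" "\<lambda>p. vp p d"] by simp
      moreover have "restrict (\<lambda>p. vp p d) S \<in> PiE S (\<lambda>_. UNIV)" by simp
      ultimately show "d \<in> tr S ` PiE S (\<lambda>_. UNIV)" by blast
    qed
  qed
qed


lemma kl_0: "kl h p (0,0,0) = 1"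
  by (simp add: kl_def S1_def S2_def S3_def fl_0)

lemma primeset_prime: "primeset S \<Longrightarrow> p \<in> S \<Longrightarrow> prime p"
  by (simp add: primeset_def)

lemma kap_S:
  assumes S: "primeset S" and d: "d \<in> P3" and sub: "PF d \<subseteq> S"
  shows "kap h d = (\<Prod>p\<in>S. kl h p (vp p d))"
  unfolding kap_def
proof (rule prod.mono_neutral_left)
  show "finite S" using S by (simp add: primeset_def)
  show "PF d \<subseteq> S" by (rule sub)
  show "\<forall>i\<in>S - PF d. kl h i (vp i d) = 1"
    using vp_notin_PF[OF d] primeset_prime[OF S] kl_0 by simp
qed

lemma kap_tr:
  assumes S: "primeset S"
  shows "kap h (tr S e) = (\<Prod>p\<in>S. kl h p (e p))"
proof -
  have "kap h (tr S e) = (\<Prod>p\<in>S. kl h p (vp p (tr S e)))"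
    by (rule kap_S[OF S tr_P3[OF S] PF_tr[OF S]])
  also have "\<dots> = (\<Prod>p\<in>S. kl h p (e p))"
    by (rule prod.cong) (use vp_tr[OF S] primeset_prime[OF S] in auto)
  finally show ?thesis .
qed

lemma tot_fst: "tot x = fst x + fst (snd x) + snd (snd x)"
  by (cases x) (simp add: tot_def)

lemma DD_tr: "DD (tr S e) = (\<Prod>p\<in>S. p ^ tot (e p))"
  by (simp add: DD_def tr_def tot_fst power_add prod.distrib)

lemma mem_bx_vp:
  "x \<in> bx (vp q u) \<longleftrightarrow> fst x \<le> multiplicity q (fst u) \<and> fst (snd x) \<le> multiplicity q (fst (snd u)) \<and> snd (snd x) \<le> multiplicity q (snd (snd u))"
  by (cases x) (simp add: bx_def vp_def)

lemma prod_pp_dvd: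
  assumes S: "primeset S" and y: "y > 0" and le: "\<And>p. p \<in> S \<Longrightarrow> f p \<le> multiplicity p y"
  shows "(\<Prod>p\<in>S. p ^ f p) dvd (y::nat)"
proof (rule multiplicity_le_imp_dvd)
  show "(\<Prod>p\<in>S. p ^ f p) \<noteq> 0" using prod_pp_pos[OF S] by (metis not_less0)
  fix q :: nat assume q: "prime q"
  show "multiplicity q (\<Prod>p\<in>S. p ^ f p) \<le> multiplicity q y"
    using mult_prod_pp[OF S q, of f] le[of q] by simp
qed

lemma bij_tr_Dv:
  assumes S: "primeset S" and u: "u \<in> P3" and sub: "PF u \<subseteq> S"
  shows "bij_betw (tr S) (PiE S (\<lambda>p. bx (vp p u))) (Dv u)"
proof (rule bij_betw_imageI)
  show "inj_on (tr S) (PiE S (\<lambda>p. bx (vp p u)))" by (rule inj_tr[OF S])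
  have upos: "fst u > 0" "fst (snd u) > 0" "snd (snd u) > 0" using u by (auto simp: P3_def)
  show "tr S ` PiE S (\<lambda>p. bx (vp p u)) = Dv u"
  proof
    show "tr S ` PiE S (\<lambda>p. bx (vp p u)) \<subseteq> Dv u"
    proof
      fix d assume "d \<in> tr S ` PiE S (\<lambda>p. bx (vp p u))"
      then obtain e where e: "e \<in> PiE S (\<lambda>p. bx (vp p u))" and d: "d = tr S e" by blast
      have le: "fst (e p) \<le> multiplicity p (fst u) \<and> fst (snd (e p)) \<le> multiplicity p (fst (snd u)) \<and> snd (snd (e p)) \<le> multiplicity p (snd (snd u))"
        if "p \<in> S" for p
        using e that mem_bx_vp[of "e p" p u] by (auto simp: PiE_def Pi_def)
      show "d \<in> Dv u"
        unfolding d Dv_def tr_def using le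
        by (auto intro!: prod_pp_dvd[OF S] upos)
    qed
    show "Dv u \<subseteq> tr S ` PiE S (\<lambda>p. bx (vp p u))"
    proof
      fix d assume dD: "d \<in> Dv u"
      have dv: "fst d dvd fst u" "fst (snd d) dvd fst (snd u)" "snd (snd d) dvd snd (snd u)"
        using dD by (auto simp: Dv_def)
      have d: "d \<in> P3" using dv upos dvd_pos_nat by (auto simp: P3_def)
      have mle: "multiplicity q (fst d) \<le> multiplicity q (fst u)"
          "multiplicity q (fst (snd d)) \<le> multiplicity q (fst (snd u))"
          "multiplicity q (snd (snd d)) \<le> multiplicity q (snd (snd u))" for q
        using dv upos by (auto intro!: dvd_imp_multiplicity_le)
      have subd: "PF d \<subseteq> S"
      proof
        fix q assume "q \<in> PF d"
        then have q: "prime q" "vp q d \<noteq> (0,0,0)" using PF_iff[OF d] by auto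
        then have "vp q u \<noteq> (0,0,0)" using mle[of q] by (auto simp: vp_def)
        then have "q \<in> PF u" using PF_iff[OF u] q by auto
        then show "q \<in> S" using sub by blast
      qed
      have "d = tr S (restrict (\<lambda>p. vp p d) S)"
        using tr_vp[OF S d subd] tr_cong[of S "restrict (\<lambda>p. vp p d) S" "\<lambda>p. vp p d"] by simp
      moreover have "restrict (\<lambda>p. vp p d) S \<in> PiE S (\<lambda>p. bx (vp p u))"
        using mle by (auto simp: bx_def vp_def)
      ultimately show "d \<in> tr S ` PiE S (\<lambda>p. bx (vp p u))" by blast
    qed
  qed
qed

lemma lcm3_local:
  assumes S: "primeset S" and u: "u \<in> P3" and sub: "PF u \<subseteq> S"
  shows "lcm3 (fst u) (fst (snd u)) (snd (snd u)) = (\<Prod>p\<in>S. p ^ mx (vp p u))"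
proof -
  have upos: "fst u > 0" "fst (snd u) > 0" "snd (snd u) > 0" using u by (auto simp: P3_def)
  have "normalize (lcm3 (fst u) (fst (snd u)) (snd (snd u))) = normalize (\<Prod>p\<in>S. p ^ mx (vp p u))"
  proof (rule multiplicity_eq_imp_eq)
    show "lcm3 (fst u) (fst (snd u)) (snd (snd u)) \<noteq> 0" using upos by (simp add: lcm3_def lcm_eq_0_iff)
    show "(\<Prod>p\<in>S. p ^ mx (vp p u)) \<noteq> 0" using prod_pp_pos[OF S] by (metis not_less0)
    fix q :: nat assume q: "prime q"
    have l: "multiplicity q (lcm3 (fst u) (fst (snd u)) (snd (snd u))) = mx (vp q u)"
    proof -
      have "lcm (fst (snd u)) (snd (snd u)) \<noteq> 0" using upos by (simp add: lcm_eq_0_iff)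
      then show ?thesis using upos q
        by (simp add: lcm3_def multiplicity_lcm mx_def vp_def)
    qed
    show "multiplicity q (lcm3 (fst u) (fst (snd u)) (snd (snd u))) = multiplicity q (\<Prod>p\<in>S. p ^ mx (vp p u))"
    proof (cases "q \<in> S")
      case True then show ?thesis using l mult_prod_pp[OF S q] by simp
    next
      case False
      then have "q \<notin> PF u" using sub by blast
      then have "vp q u = (0,0,0)" using vp_notin_PF[OF u q] by simp
      then show ?thesis using l mult_prod_pp[OF S q] False by (simp add: mx_def)
    qed
  qed
  then show ?thesis by simp
qed

lemma crt_dvd:
  assumes S: "primeset S" and dv: "\<And>p. p \<in> S \<Longrightarrow> int (p ^ f p) dvd z"
  shows "int (\<Prod>p\<in>S. p ^ f p) dvd z"
proof -
  have "finite S" using S by (simp add: primeset_def)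
  then show ?thesis using S dv
  proof (induction S rule: finite_induct)
    case empty then show ?case by simp
  next
    case (insert p S)
    have pS: "primeset S" using insert.prems(1) insert.hyps(1) by (simp add: primeset_def)
    have pp: "prime p" using insert.prems(1) by (simp add: primeset_def)
    have IH: "int (\<Prod>p\<in>S. p ^ f p) dvd z" using insert.IH[OF pS] insert.prems(2) by blast
    have cop: "coprime (p ^ f p) (\<Prod>q\<in>S. q ^ f q)"
    proof (rule prod_coprime_right)
      fix q assume "q \<in> S"
      then have "prime q" "p \<noteq> q" using pS insert.hyps(2) by (auto simp: primeset_def)
      then have "coprime p q" using pp primes_coprime by blast
      then show "coprime (p ^ f p) (q ^ f q)" by simp
    qed
    have cop': "coprime (int (p ^ f p)) (int (\<Prod>q\<in>S. q ^ f q))"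
      using cop by (simp only: coprime_int_iff)
    have "int (p ^ f p) * int (\<Prod>q\<in>S. q ^ f q) dvd z"
      by (rule divides_mult[OF insert.prems(2) IH cop']) simp
    then show ?case by (simp only: prod.insert[OF insert.hyps] of_nat_mult)
  qed
qed

lemma crt_coord:
  assumes S: "primeset S" and c: "\<And>p. p \<in> S \<Longrightarrow> [z = r] (mod int (p ^ f p))"
  shows "[z = r] (mod int (\<Prod>p\<in>S. p ^ f p))"
  using crt_dvd[OF S, of f "z - r"] c by (simp add: cong_iff_dvd_diff)

definition sysok :: "nat \<Rightarrow> nat \<Rightarrow> nat \<Rightarrow> nat \<Rightarrow> int \<Rightarrow> bool" where
  "sysok h u v w n \<longleftrightarrow> [n = - int h] (mod int u) \<and> [n = 0] (mod int v) \<and> [n = int h] (mod int w)"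

lemma gsys_sysok: "gsys h u v w = (if \<exists>n. sysok h u v w n then 1 else 0)"
  by (simp add: gsys_def sysok_def)

lemma sysok_dvd: "sysok h u v w n \<Longrightarrow> u' dvd u \<Longrightarrow> v' dvd v \<Longrightarrow> w' dvd w \<Longrightarrow> sysok h u' v' w' n"
  unfolding sysok_def by (meson cong_dvd_modulus of_nat_dvd_iff)

lemma gsys_local_iff:
  assumes S: "primeset S" and u: "u \<in> P3" and sub: "PF u \<subseteq> S"
  shows "(\<exists>n. sysok h (fst u) (fst (snd u)) (snd (snd u)) n) \<longleftrightarrow>
         (\<forall>p\<in>S. \<exists>n. sysok h (p ^ fst (vp p u)) (p ^ fst (snd (vp p u))) (p ^ snd (snd (vp p u))) n)"
proof
  assume "\<exists>n. sysok h (fst u) (fst (snd u)) (snd (snd u)) n"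
  then obtain n where n: "sysok h (fst u) (fst (snd u)) (snd (snd u)) n" by blast
  show "\<forall>p\<in>S. \<exists>n. sysok h (p ^ fst (vp p u)) (p ^ fst (snd (vp p u))) (p ^ snd (snd (vp p u))) n"
  proof
    fix p assume "p \<in> S"
    have "sysok h (p ^ fst (vp p u)) (p ^ fst (snd (vp p u))) (p ^ snd (snd (vp p u))) n"
      by (rule sysok_dvd[OF n]) (simp_all add: vp_def multiplicity_dvd)
    then show "\<exists>n. sysok h (p ^ fst (vp p u)) (p ^ fst (snd (vp p u))) (p ^ snd (snd (vp p u))) n" by blast
  qed
next
  assume "\<forall>p\<in>S. \<exists>n. sysok h (p ^ fst (vp p u)) (p ^ fst (snd (vp p u))) (p ^ snd (snd (vp p u))) n"
  then obtain N where N: "\<And>p. p \<in> S \<Longrightarrow> sysok h (p ^ fst (vp p u)) (p ^ fst (snd (vp p u))) (p ^ snd (snd (vp p u))) (N p)"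
    by metis
  define M where "M p = p ^ mx (vp p u)" for p
  have Mpos: "M p > 0" if "p \<in> S" for p
    using that primeset_prime[OF S] by (simp add: M_def prime_gt_0_nat)
  have cop: "\<forall>i\<in>S. \<forall>j\<in>S. i \<noteq> j \<longrightarrow> coprime (M i) (M j)"
    using primeset_prime[OF S] primes_coprime unfolding M_def by (metis coprime_power_left_iff coprime_power_right_iff)
  have fin: "finite S" using S by (simp add: primeset_def)
  obtain x :: nat where x: "\<And>p. p \<in> S \<Longrightarrow> [x = nat (N p mod int (M p))] (mod M p)"
    using chinese_remainder_nat[OF fin cop, of "\<lambda>p. nat (N p mod int (M p))"] by blast
  have xN: "[int x = N p] (mod int (M p))" if "p \<in> S" for p
  proof -
    have "[int x = int (nat (N p mod int (M p)))] (mod int (M p))"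
      using x[OF that] by (simp only: cong_int_iff)
    moreover have "int (nat (N p mod int (M p))) = N p mod int (M p)"
      using Mpos[OF that] by simp
    ultimately show ?thesis by simp
  qed
  have dvM: "int (p ^ k) dvd int (M p)" if "k \<le> mx (vp p u)" for p k
    using that by (simp add: M_def le_imp_power_dvd)
  have loc: "sysok h (p ^ fst (vp p u)) (p ^ fst (snd (vp p u))) (p ^ snd (snd (vp p u))) (int x)" if "p \<in> S" for p
  proof -
    have a: "[int x = N p] (mod int (p ^ fst (vp p u)))"
      by (rule cong_dvd_modulus[OF xN[OF that] dvM]) (simp add: mx_def vp_def)
    have b: "[int x = N p] (mod int (p ^ fst (snd (vp p u))))"
      by (rule cong_dvd_modulus[OF xN[OF that] dvM]) (simp add: mx_def vp_def)
    have c: "[int x = N p] (mod int (p ^ snd (snd (vp p u))))"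
      by (rule cong_dvd_modulus[OF xN[OF that] dvM]) (simp add: mx_def vp_def)
    show ?thesis using N[OF that] a b c unfolding sysok_def by (meson cong_trans)
  qed
  have tv: "tr S (\<lambda>p. vp p u) = u" by (rule tr_vp[OF S u sub])
  have u1: "(\<Prod>p\<in>S. p ^ fst (vp p u)) = fst u" using arg_cong[OF tv, of fst] by (simp add: tr_def)
  have u2: "(\<Prod>p\<in>S. p ^ fst (snd (vp p u))) = fst (snd u)" using arg_cong[OF tv, of "\<lambda>x. fst (snd x)"] by (simp add: tr_def)
  have u3: "(\<Prod>p\<in>S. p ^ snd (snd (vp p u))) = snd (snd u)" using arg_cong[OF tv, of "\<lambda>x. snd (snd x)"] by (simp add: tr_def)
  have "sysok h (fst u) (fst (snd u)) (snd (snd u)) (int x)"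
    unfolding sysok_def
  proof (intro conjI)
    show "[int x = - int h] (mod int (fst u))"
      using crt_coord[OF S, of "int x" "- int h" "\<lambda>p. fst (vp p u)"] loc unfolding u1 sysok_def by blast
    show "[int x = 0] (mod int (fst (snd u)))"
      using crt_coord[OF S, of "int x" 0 "\<lambda>p. fst (snd (vp p u))"] loc unfolding u2 sysok_def by blast
    show "[int x = int h] (mod int (snd (snd u)))"
      using crt_coord[OF S, of "int x" "int h" "\<lambda>p. snd (snd (vp p u))"] loc unfolding u3 sysok_def by blast
  qed
  then show "\<exists>n. sysok h (fst u) (fst (snd u)) (snd (snd u)) n" by blast
qed


lemma gsys_local:
  assumes S: "primeset S" and u: "u \<in> P3" and sub: "PF u \<subseteq> S"
  shows "gsys h (fst u) (fst (snd u)) (snd (snd u)) =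
         (\<Prod>p\<in>S. gsys h (p ^ fst (vp p u)) (p ^ fst (snd (vp p u))) (p ^ snd (snd (vp p u))))"
proof (cases "\<forall>p\<in>S. \<exists>n. sysok h (p ^ fst (vp p u)) (p ^ fst (snd (vp p u))) (p ^ snd (snd (vp p u))) n")
  case True
  then have "gsys h (fst u) (fst (snd u)) (snd (snd u)) = 1"
    using gsys_local_iff[OF S u sub] by (simp add: gsys_sysok)
  moreover have "(\<Prod>p\<in>S. gsys h (p ^ fst (vp p u)) (p ^ fst (snd (vp p u))) (p ^ snd (snd (vp p u)))) = 1"
    by (rule prod.neutral) (use True in \<open>simp add: gsys_sysok\<close>)
  ultimately show ?thesis by simp
next
  case False
  then have "gsys h (fst u) (fst (snd u)) (snd (snd u)) = 0"
    using gsys_local_iff[OF S u sub] by (simp add: gsys_sysok)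
  moreover have "(\<Prod>p\<in>S. gsys h (p ^ fst (vp p u)) (p ^ fst (snd (vp p u))) (p ^ snd (snd (vp p u)))) = 0"
  proof -
    have fin: "finite S" using S by (simp add: primeset_def)
    from False obtain p where "p \<in> S" "\<not> (\<exists>n. sysok h (p ^ fst (vp p u)) (p ^ fst (snd (vp p u))) (p ^ snd (snd (vp p u))) n)"
      by blast
    then show ?thesis using fin by (subst prod_zero_iff) (auto simp: gsys_sysok)
  qed
  ultimately show ?thesis by simp
qed

lemma fl_alt: "fl h p x = gsys h (p ^ fst x) (p ^ fst (snd x)) (p ^ snd (snd x)) / real (p ^ mx x)"
  by (cases x) (simp add: fl_def lcm3_pp)

lemma f3_local:
  assumes S: "primeset S" and u: "u \<in> P3" and sub: "PF u \<subseteq> S"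
  shows "gsys h (fst u) (fst (snd u)) (snd (snd u)) / real (lcm3 (fst u) (fst (snd u)) (snd (snd u)))
         = (\<Prod>p\<in>S. fl h p (vp p u))"
proof -
  have "(\<Prod>p\<in>S. fl h p (vp p u)) =
        (\<Prod>p\<in>S. gsys h (p ^ fst (vp p u)) (p ^ fst (snd (vp p u))) (p ^ snd (snd (vp p u)))) / (\<Prod>p\<in>S. real (p ^ mx (vp p u)))"
    by (simp only: fl_alt prod_dividef)
  also have "\<dots> = gsys h (fst u) (fst (snd u)) (snd (snd u)) / real (lcm3 (fst u) (fst (snd u)) (snd (snd u)))"
    by (simp only: gsys_local[OF S u sub, symmetric] lcm3_local[OF S u sub] of_nat_prod)
  finally show ?thesis by simp
qed

lemma divisor_identity:
  assumes u: "u \<in> P3"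
  shows "gsys h (fst u) (fst (snd u)) (snd (snd u)) / real (lcm3 (fst u) (fst (snd u)) (snd (snd u)))
         = (\<Sum>d\<in>Dv u. kap h d * real (DD d)) / real (DD u)"
proof -
  define S where "S = PF u"
  have S: "primeset S" by (simp add: S_def primeset_PF)
  have sub: "PF u \<subseteq> S" by (simp add: S_def)
  have fin: "finite S" using S by (simp add: primeset_def)
  have ppos: "p > 0" if "p \<in> S" for p using primeset_prime[OF S that] by (simp add: prime_gt_0_nat)
  have "(\<Sum>d\<in>Dv u. kap h d * real (DD d)) = (\<Sum>e\<in>PiE S (\<lambda>p. bx (vp p u)). kap h (tr S e) * real (DD (tr S e)))"
    by (rule sum.reindex_bij_betw[OF bij_tr_Dv[OF S u sub], symmetric])
  also have "\<dots> = (\<Sum>e\<in>PiE S (\<lambda>p. bx (vp p u)). \<Prod>p\<in>S. real p ^ tot (e p) * kl h p (e p))"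
    by (rule sum.cong) (simp_all add: kap_tr[OF S] DD_tr prod.distrib mult.commute)
  also have "\<dots> = (\<Prod>p\<in>S. \<Sum>x\<in>bx (vp p u). real p ^ tot x * kl h p x)"
    by (rule prod_sum_PiE[symmetric]) (simp_all add: fin)
  also have "\<dots> = (\<Prod>p\<in>S. real p ^ tot (vp p u) * fl h p (vp p u))"
    by (rule prod.cong) (simp_all add: box_tele ppos)
  also have "\<dots> = real (DD u) * (\<Prod>p\<in>S. fl h p (vp p u))"
  proof -
    have "DD u = DD (tr S (\<lambda>p. vp p u))" by (simp add: tr_vp[OF S u sub])
    also have "\<dots> = (\<Prod>p\<in>S. p ^ tot (vp p u))" by (rule DD_tr)
    finally show ?thesis by (simp add: prod.distrib)
  qed
  finally have eq: "(\<Sum>d\<in>Dv u. kap h d * real (DD d)) = real (DD u) * (\<Prod>p\<in>S. fl h p (vp p u))" .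
  have "DD u > 0" by (rule P3_DD[OF u])
  then show ?thesis unfolding eq f3_local[OF S u sub] by simp
qed

definition Phi :: "nat \<Rightarrow> trip \<Rightarrow> real" where
  "Phi h d = \<bar>kap h d\<bar> * real (DD d) powr (1/4)"
definition Sn :: "nat \<Rightarrow> nat set" where
  "Sn n = {p. prime p \<and> p \<le> n}"
definition P2h :: "nat \<Rightarrow> nat set" where
  "P2h h = {p. prime p \<and> p dvd 2 * h}"
definition Kp :: "nat \<Rightarrow> nat \<Rightarrow> real" where
  "Kp h p = infsum (\<lambda>e. \<bar>kl h p e\<bar> * (real p powr (1/4)) ^ tot e) UNIV"
definition Zc :: real where
  "Zc = suminf (\<lambda>n. real n powr (-3/2))"
definition B0 :: "nat \<Rightarrow> real" where
  "B0 h = (\<Prod>p\<in>P2h h. Kp h p) * exp (5 * Zc)"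

lemma primeset_Sn: "primeset (Sn n)"
  by (simp add: primeset_def Sn_def)

lemma finite_P2h: "h > 0 \<Longrightarrow> finite (P2h h)"
proof -
  assume h: "h > 0"
  have "P2h h \<subseteq> {..2*h}" using h by (auto simp: P2h_def dest: dvd_imp_le)
  then show ?thesis by (rule finite_subset) simp
qed

lemma pow_powr: "0 < (x::real) \<Longrightarrow> (x ^ n) powr r = (x powr r) ^ n"
proof -
  assume x: "0 < x"
  have "x ^ n = x powr real n" using powr_realpow[OF x] by simp
  then have "(x ^ n) powr r = x powr (real n * r)" by (simp add: powr_powr)
  also have "\<dots> = (x powr r) ^ n" using x by (simp add: powr_power)
  finally show ?thesis .
qed

lemma Phi_tr:
  assumes S: "primeset S"
  shows "Phi h (tr S e) = (\<Prod>p\<in>S. \<bar>kl h p (e p)\<bar> * (real p powr (1/4)) ^ tot (e p))"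
proof -
  have ppos: "real p > 0" if "p \<in> S" for p using primeset_prime[OF S that] by (simp add: prime_gt_0_nat)
  have "real (DD (tr S e)) powr (1/4) = (\<Prod>p\<in>S. real p ^ tot (e p)) powr (1/4)"
    by (simp add: DD_tr)
  also have "\<dots> = (\<Prod>p\<in>S. (real p ^ tot (e p)) powr (1/4))" by (rule prod_powr_distrib)
  also have "\<dots> = (\<Prod>p\<in>S. (real p powr (1/4)) ^ tot (e p))"
  proof (rule prod.cong)
    fix p assume "p \<in> S"
    then show "(real p ^ tot (e p)) powr (1/4) = (real p powr (1/4)) ^ tot (e p)"
      by (rule pow_powr[OF ppos])
  qed simp
  finally show ?thesis
    by (simp add: Phi_def kap_tr[OF S] prod.distrib abs_prod)
qed

lemma Phi_nonneg: "Phi h d \<ge> 0"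
  by (simp add: Phi_def)

lemma kl_abs_summable: "prime p \<Longrightarrow> (\<lambda>e. \<bar>kl h p e\<bar> * (real p powr (1/4)) ^ tot e) summable_on UNIV"
  by (rule bounded_mx_summable[OF prime_ge_2_nat]) (auto intro: kl_bound)

lemma kl_summable: "prime p \<Longrightarrow> kl h p summable_on UNIV"
  by (rule bounded_mx_summable'[OF prime_ge_2_nat]) (auto intro: kl_bound)

lemma Zc_summable: "summable (\<lambda>n. real n powr (-3/2))"
  by (simp add: summable_real_powr_iff)

lemma local_finite_bound_bad:
  assumes p: "prime p" and G: "finite G"
  shows "(\<Sum>x\<in>G. \<bar>kl h p x\<bar> * (real p powr (1/4)) ^ tot x) \<le> Kp h p"
  unfolding Kp_def by (rule finite_sum_le_infsum[OF kl_abs_summable[OF p] G]) auto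

lemma Kp_nonneg: "prime p \<Longrightarrow> Kp h p \<ge> 0"
  unfolding Kp_def by (rule infsum_nonneg) auto

lemma Phi_finite_bound:
  assumes h: "h > 0" and F: "finite F" "F \<subseteq> P3"
  shows "sum (Phi h) F \<le> B0 h"
proof -
  define n where "n = max (2 * h) (\<Sum>d\<in>F. DD d)"
  define S where "S = Sn n"
  have S: "primeset S" by (simp add: S_def primeset_Sn)
  have finS: "finite S" using S by (simp add: primeset_def)
  have FS: "F \<subseteq> Smooth S"
  proof
    fix d assume dF: "d \<in> F"
    have d: "d \<in> P3" using dF F by blast
    have "DD d \<le> (\<Sum>d\<in>F. DD d)" by (rule member_le_sum) (use dF F in auto)
    then have Dn: "DD d \<le> n" by (simp add: n_def)
    have "PF d \<subseteq> S"
    proof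
      fix q assume "q \<in> PF d"
      then have "prime q" "q dvd DD d" by (auto simp: PF_def in_prime_factors_iff)
      then have "q \<le> DD d" using P3_DD[OF d] by (simp add: dvd_imp_le)
      then show "q \<in> S" using Dn \<open>prime q\<close> by (simp add: S_def Sn_def)
    qed
    then show "d \<in> Smooth S" using d by (simp add: Smooth_def)
  qed
  define G where "G = (\<lambda>d. restrict (\<lambda>p. vp p d) S) ` F"
  have finG: "finite G" using F by (simp add: G_def)
  have GPiE: "G \<subseteq> PiE S (\<lambda>_. UNIV)" by (auto simp: G_def)
  have trG: "tr S ` G = F"
  proof -
    have "tr S (restrict (\<lambda>p. vp p d) S) = d" if "d \<in> F" for d
    proof -
      have "d \<in> Smooth S" using that FS by blast
      then have "d \<in> P3" "PF d \<subseteq> S" by (auto simp: Smooth_def)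
      then show ?thesis
        using tr_vp[OF S] tr_cong[of S "restrict (\<lambda>p. vp p d) S" "\<lambda>p. vp p d"] by simp
    qed
    then show ?thesis unfolding G_def image_image by simp
  qed
  have injG: "inj_on (tr S) G" using inj_on_subset[OF inj_tr[OF S] GPiE] .
  define \<psi> where "\<psi> p x = \<bar>kl h p x\<bar> * (real p powr (1/4)) ^ tot x" for p x
  have \<psi>nn: "\<psi> p x \<ge> 0" for p x by (simp add: \<psi>_def)
  define Gp where "Gp p = (\<lambda>g. g p) ` G" for p
  have finGp: "finite (Gp p)" for p using finG by (simp add: Gp_def)
  have GGp: "G \<subseteq> PiE S Gp"
    using GPiE by (auto simp: Gp_def PiE_def Pi_def)
  have "sum (Phi h) F = (\<Sum>g\<in>G. Phi h (tr S g))"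
    unfolding trG[symmetric] using sum.reindex[OF injG, of "Phi h"] by (simp add: o_def)
  also have "\<dots> = (\<Sum>g\<in>G. \<Prod>p\<in>S. \<psi> p (g p))"
    by (simp add: Phi_tr[OF S] \<psi>_def)
  also have "\<dots> \<le> (\<Sum>g\<in>PiE S Gp. \<Prod>p\<in>S. \<psi> p (g p))"
    by (rule sum_mono2) (auto simp: finite_PiE finS finGp GGp \<psi>nn prod_nonneg)
  also have "\<dots> = (\<Prod>p\<in>S. \<Sum>x\<in>Gp p. \<psi> p x)"
    by (rule prod_sum_PiE[symmetric]) (simp_all add: finS finGp)
  also have "\<dots> = (\<Prod>p\<in>S \<inter> P2h h. \<Sum>x\<in>Gp p. \<psi> p x) * (\<Prod>p\<in>S - P2h h. \<Sum>x\<in>Gp p. \<psi> p x)"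
    by (rule prod.Int_Diff[OF finS])
  also have "\<dots> \<le> (\<Prod>p\<in>P2h h. Kp h p) * exp (5 * Zc)"
  proof (rule mult_mono)
    have SP: "S \<inter> P2h h = P2h h"
      using h by (auto simp: S_def Sn_def P2h_def n_def dest: dvd_imp_le)
    show "(\<Prod>p\<in>S \<inter> P2h h. \<Sum>x\<in>Gp p. \<psi> p x) \<le> (\<Prod>p\<in>P2h h. Kp h p)"
      unfolding SP
      by (rule prod_mono) (auto simp: P2h_def \<psi>_def sum_nonneg intro!: local_finite_bound_bad finGp)
    have "(\<Prod>p\<in>S - P2h h. \<Sum>x\<in>Gp p. \<psi> p x) \<le> (\<Prod>p\<in>S - P2h h. exp (5 * real p powr (-3/2)))"
    proof (rule prod_mono)
      fix p assume pS: "p \<in> S - P2h h"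
      then have pp: "prime p" and nd: "\<not> p dvd 2 * h" by (auto simp: S_def Sn_def P2h_def)
      have "(\<Sum>x\<in>Gp p. \<psi> p x) \<le> 1 + 5 * real p powr (-3/2)"
        unfolding \<psi>_def by (rule good_weight_bound[OF pp nd finGp])
      also have "\<dots> \<le> exp (5 * real p powr (-3/2))" by (rule exp_ge_add_one_self)
      finally show "0 \<le> (\<Sum>x\<in>Gp p. \<psi> p x) \<and> (\<Sum>x\<in>Gp p. \<psi> p x) \<le> exp (5 * real p powr (-3/2))"
        by (simp add: sum_nonneg \<psi>nn)
    qed
    also have "\<dots> = exp (5 * (\<Sum>p\<in>S - P2h h. real p powr (-3/2)))"
      using finS by (simp add: exp_sum sum_distrib_left)
    also have "\<dots> \<le> exp (5 * Zc)"
    proof -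
      have "(\<Sum>p\<in>S - P2h h. real p powr (-3/2)) \<le> Zc"
        unfolding Zc_def by (rule sum_le_suminf[OF Zc_summable]) (use finS in auto)
      then show ?thesis by simp
    qed
    finally show "(\<Prod>p\<in>S - P2h h. \<Sum>x\<in>Gp p. \<psi> p x) \<le> exp (5 * Zc)" .
    show "0 \<le> (\<Prod>p\<in>S - P2h h. \<Sum>x\<in>Gp p. \<psi> p x)"
      by (intro prod_nonneg sum_nonneg \<psi>nn)
    show "0 \<le> (\<Prod>p\<in>P2h h. Kp h p)"
      by (rule prod_nonneg) (auto simp: P2h_def Kp_nonneg)
  qed
  finally show ?thesis by (simp add: B0_def)
qed

lemma Phi_summable:
  assumes h: "h > 0"
  shows "Phi h summable_on P3"
proof (rule nonneg_bdd_above_summable_on)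
  show "\<And>x. x \<in> P3 \<Longrightarrow> 0 \<le> Phi h x" by (simp add: Phi_nonneg)
  show "bdd_above (sum (Phi h) ` {F. F \<subseteq> P3 \<and> finite F})"
    by (rule bdd_aboveI2[of _ _ "B0 h"]) (use Phi_finite_bound[OF h] in auto)
qed

lemma kap_le_Phi:
  assumes d: "d \<in> P3"
  shows "\<bar>kap h d\<bar> \<le> Phi h d"
proof -
  have "1 \<le> real (DD d)" using P3_DD[OF d] by simp
  then have "1 \<le> real (DD d) powr (1/4)" by (rule ge_one_powr_ge_zero) simp
  from mult_left_mono[OF this abs_ge_zero[of "kap h d"]] show ?thesis by (simp add: Phi_def)
qed

lemma kap_abs_summable:
  assumes h: "h > 0"
  shows "(\<lambda>d. \<bar>kap h d\<bar>) summable_on P3"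
  by (rule summable_on_comparison_test[OF Phi_summable[OF h]]) (simp_all add: kap_le_Phi)

lemma kap_summable:
  assumes h: "h > 0"
  shows "kap h summable_on P3"
  using kap_abs_summable[OF h] summable_on_iff_abs_summable_on_real[of "kap h" P3] by simp

definition aa :: "nat \<Rightarrow> real" where
  "aa = (\<lambda>n. if prime n then (1 - 1 / real n)^2 * (1 + 2 / real n) else 1)"

lemma euler_prod_aa: "euler_prod = prodinf aa"
  by (simp add: euler_prod_def aa_def)

lemma smooth_sum:
  assumes S: "primeset S"
  shows "infsum (kap h) (Smooth S) = (\<Prod>p\<in>S. infsum (kl h p) UNIV)"
proof -
  have "infsum (kap h) (Smooth S) = infsum (\<lambda>e. kap h (tr S e)) (PiE S (\<lambda>_. UNIV))"
    by (rule infsum_reindex_bij_betw[OF bij_tr_smooth[OF S], symmetric])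
  also have "\<dots> = infsum (\<lambda>e. \<Prod>p\<in>S. kl h p (e p)) (PiE S (\<lambda>_. UNIV))"
    by (rule infsum_cong) (simp add: kap_tr[OF S])
  also have "\<dots> = (\<Prod>p\<in>S. infsum (kl h p) UNIV)"
  proof (rule infsum_prod_PiE_abs)
    show "finite S" using S by (simp add: primeset_def)
    fix p assume "p \<in> S"
    then have "prime p" by (rule primeset_prime[OF S])
    then have "kl h p summable_on UNIV" by (rule kl_summable)
    then show "(\<lambda>y. norm (kl h p y)) summable_on UNIV"
      using summable_on_iff_abs_summable_on_real[of "kl h p" UNIV] by simp
  qed
  finally show ?thesis .
qed

lemma lam_bad: "prime p \<Longrightarrow> infsum (kl h p) UNIV = (1 - 1 / real p) ^ 3 * local_sum h p"
  by (rule infsumI[OF kl_has_sum])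

lemma lam_good: "prime p \<Longrightarrow> \<not> p dvd 2 * h \<Longrightarrow> infsum (kl h p) UNIV = aa p"
  by (simp add: aa_def infsumI[OF kl_has_sum_good])

lemma prod_lam:
  assumes h: "h > 0" and n: "n \<ge> 2 * h"
  shows "(\<Prod>p\<in>Sn n. infsum (kl h p) UNIV) = Delta h * (\<Prod>i\<le>n. aa i)"
proof -
  have finS: "finite (Sn n)" using primeset_Sn[of n] by (simp add: primeset_def)
  have SP: "Sn n \<inter> P2h h = P2h h"
    using h n by (auto simp: Sn_def P2h_def dest: dvd_imp_le)
  have fact: "(1 - 1 / real p) ^ 3 * local_sum h p = ((1 - 1 / real p) * inverse (1 + 2 / real p) * local_sum h p) * aa p"
    if "prime p" for p
  proof -
    have "real p > 0" using that by (simp add: prime_gt_0_nat)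
    then have "1 + 2 / real p \<noteq> 0" by (smt (verit) divide_pos_pos)
    then have inv: "inverse (1 + 2 / real p) * (1 + 2 / real p) = 1" by simp
    have aap: "aa p = (1 - 1 / real p)^2 * (1 + 2 / real p)" using that by (simp add: aa_def)
    have "((1 - 1 / real p) * inverse (1 + 2 / real p) * local_sum h p) * aa p
        = (1 - 1 / real p) ^ 3 * local_sum h p * (inverse (1 + 2 / real p) * (1 + 2 / real p))"
      unfolding aap by (simp add: power2_eq_square power3_eq_cube mult_ac)
    then show ?thesis unfolding inv by (metis mult_1_right)
  qed
  have "(\<Prod>p\<in>Sn n. infsum (kl h p) UNIV) = (\<Prod>p\<in>Sn n \<inter> P2h h. infsum (kl h p) UNIV) * (\<Prod>p\<in>Sn n - P2h h. infsum (kl h p) UNIV)"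
    by (rule prod.Int_Diff[OF finS])
  also have "(\<Prod>p\<in>Sn n \<inter> P2h h. infsum (kl h p) UNIV) = (\<Prod>p\<in>P2h h. ((1 - 1 / real p) * inverse (1 + 2 / real p) * local_sum h p) * aa p)"
    unfolding SP by (rule prod.cong) (auto simp: P2h_def lam_bad fact)
  also have "\<dots> = Delta h * (\<Prod>p\<in>P2h h. aa p)"
    by (simp add: prod.distrib Delta_def P2h_def)
  also have "(\<Prod>p\<in>Sn n - P2h h. infsum (kl h p) UNIV) = (\<Prod>p\<in>Sn n - P2h h. aa p)"
    by (rule prod.cong) (auto simp: Sn_def P2h_def lam_good)
  also have "Delta h * (\<Prod>p\<in>P2h h. aa p) * (\<Prod>p\<in>Sn n - P2h h. aa p) = Delta h * (\<Prod>p\<in>Sn n. aa p)"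
  proof -
    have "(\<Prod>p\<in>Sn n. aa p) = (\<Prod>p\<in>Sn n \<inter> P2h h. aa p) * (\<Prod>p\<in>Sn n - P2h h. aa p)"
      by (rule prod.Int_Diff[OF finS])
    then show ?thesis unfolding SP by simp
  qed
  also have "(\<Prod>p\<in>Sn n. aa p) = (\<Prod>i\<le>n. aa i)"
    by (rule prod.mono_neutral_left) (auto simp: Sn_def aa_def)
  finally show ?thesis .
qed

lemma Delta_nonzero:
  assumes h: "h > 0"
  shows "Delta h \<noteq> 0"
proof -
  have ls: "local_sum h p \<ge> 1" if "prime p" for p
  proof -
    have "(\<Sum>e\<in>{(0,0,0)}. fl h p e) \<le> infsum (fl h p) UNIV"
      by (rule finite_sum_le_infsum[OF fl_summable[OF that]]) (auto simp: fl_nonneg[OF that])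
    then show ?thesis by (simp add: local_sum_fl fl_0)
  qed
  have "(1 - 1 / real p) * inverse (1 + 2 / real p) * local_sum h p \<noteq> 0" if "prime p" for p
  proof -
    have "real p \<ge> 2" using prime_ge_2_nat[OF that] by simp
    then have "1 - 1 / real p \<noteq> 0" "1 + 2 / real p \<noteq> 0" by (auto simp: field_simps)
    then show ?thesis using ls[OF that] by simp
  qed
  then show ?thesis
    unfolding Delta_def using finite_P2h[OF h] by (subst prod_zero_iff) (auto simp: P2h_def)
qed

lemma aa_convergent: "convergent_prod aa"
proof -
  have b: "norm (aa n - 1) \<le> 3 * real n powr (-2)" for n
  proof (cases "prime n")
    case True
    then have n2: "real n \<ge> 2" using prime_ge_2_nat by simp
    have pw: "real n powr (-2) = 1 / real n ^ 2"
    proof -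
      have "real n powr 2 = real n ^ 2" using powr_realpow[of "real n" 2] n2 by simp
      then show ?thesis by (simp add: powr_minus divide_inverse)
    qed
    have "aa n - 1 = - 3 / real n ^ 2 + 2 / real n ^ 3"
      using True n2 by (simp add: aa_def field_simps power2_eq_square power3_eq_cube)
    moreover have "2 / real n ^ 3 \<le> 3 / real n ^ 2"
      using n2 by (simp add: field_simps power2_eq_square power3_eq_cube)
    moreover have "0 \<le> 2 / real n ^ 3" using n2 by simp
    ultimately have "\<bar>aa n - 1\<bar> \<le> 3 / real n ^ 2" by simp
    then show ?thesis using pw by simp
  next
    case False then show ?thesis by (simp add: aa_def)
  qed
  have "summable (\<lambda>n. 3 * real n powr (-2))"
    by (intro summable_mult) (simp add: summable_real_powr_iff)
  then have "summable (\<lambda>n. norm (aa n - 1))"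
    by (rule summable_comparison_test'[where N=0]) (use b in simp)
  then have "abs_convergent_prod aa" by (simp add: abs_convergent_prod_conv_summable)
  then show ?thesis by (rule abs_convergent_prod_imp_convergent_prod)
qed

lemma aa_lim: "(\<lambda>n. \<Prod>i\<le>n. aa i) \<longlonglongrightarrow> euler_prod"
  unfolding euler_prod_aa by (rule convergent_prod_LIMSEQ[OF aa_convergent])

lemma Smooth_sub: "Smooth S \<subseteq> P3" by (auto simp: Smooth_def)

lemma tail_pointwise:
  assumes n: "n \<ge> 1" and d: "d \<in> P3 - Smooth (Sn n)"
  shows "\<bar>kap h d\<bar> \<le> Phi h d * real n powr (-1/4)"
proof -
  have dP: "d \<in> P3" and ns: "\<not> PF d \<subseteq> Sn n" using d by (auto simp: Smooth_def)
  then obtain p where p: "p \<in> PF d" "p \<notin> Sn n" by blast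
  then have pp: "prime p" "p dvd DD d" by (auto simp: PF_def in_prime_factors_iff)
  then have "p > n" using p(2) by (auto simp: Sn_def)
  moreover have "p \<le> DD d" using pp P3_DD[OF dP] by (simp add: dvd_imp_le)
  ultimately have Dn: "real n \<le> real (DD d)" by simp
  have "real n powr (1/4) \<le> real (DD d) powr (1/4)" by (rule powr_mono2) (use Dn in auto)
  then have "\<bar>kap h d\<bar> * real n powr (1/4) \<le> Phi h d" 
    unfolding Phi_def by (rule mult_left_mono) simp
  then have "\<bar>kap h d\<bar> * real n powr (1/4) * real n powr (-1/4) \<le> Phi h d * real n powr (-1/4)"
    by (rule mult_right_mono) simp
  moreover have "real n powr (1/4) * real n powr (-1/4) = 1"
    using n by (simp add: powr_add[symmetric])
  ultimately show ?thesis by (simp add: mult.assoc)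
qed

lemma tail_bound:
  assumes h: "h > 0" and n: "n \<ge> 1"
  shows "\<bar>infsum (kap h) P3 - infsum (kap h) (Smooth (Sn n))\<bar> \<le> infsum (Phi h) P3 * real n powr (-1/4)"
proof -
  define Sm where "Sm = Smooth (Sn n)"
  define c where "c = real n powr (-1/4)"
  have c0: "c \<ge> 0" by (simp add: c_def)
  have sub: "Sm \<subseteq> P3" by (simp add: Sm_def Smooth_sub)
  have "infsum (kap h) P3 - infsum (kap h) Sm = infsum (kap h) (P3 - Sm)"
    by (rule infsum_Diff[OF kap_summable[OF h] summable_on_subset[OF kap_summable[OF h] sub] sub, symmetric])
  moreover have "\<bar>infsum (kap h) (P3 - Sm)\<bar> \<le> infsum (\<lambda>d. \<bar>kap h d\<bar>) (P3 - Sm)"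
  proof -
    have "(\<lambda>d. norm (kap h d)) summable_on (P3 - Sm)"
      using summable_on_subset[OF kap_abs_summable[OF h], of "P3 - Sm"] by simp
    then have "norm (infsum (kap h) (P3 - Sm)) \<le> infsum (\<lambda>d. norm (kap h d)) (P3 - Sm)"
      by (rule norm_infsum_bound)
    then show ?thesis by simp
  qed
  moreover have "infsum (\<lambda>d. \<bar>kap h d\<bar>) (P3 - Sm) \<le> infsum (\<lambda>d. Phi h d * c) (P3 - Sm)"
  proof (rule infsum_mono)
    show "(\<lambda>d. \<bar>kap h d\<bar>) summable_on P3 - Sm"
      using summable_on_subset[OF kap_abs_summable[OF h], of "P3 - Sm"] by simp
    show "(\<lambda>d. Phi h d * c) summable_on P3 - Sm"
      by (rule summable_on_cmult_left) (rule summable_on_subset[OF Phi_summable[OF h]], auto)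
    fix d assume "d \<in> P3 - Sm"
    then show "\<bar>kap h d\<bar> \<le> Phi h d * c" unfolding c_def Sm_def by (rule tail_pointwise[OF n])
  qed
  moreover have "infsum (\<lambda>d. Phi h d * c) (P3 - Sm) = infsum (Phi h) (P3 - Sm) * c"
    by (rule infsum_cmult_left')
  moreover have "infsum (Phi h) (P3 - Sm) \<le> infsum (Phi h) P3"
    by (rule infsum_mono2) (auto simp: Phi_nonneg intro: summable_on_subset[OF Phi_summable[OF h]])
  ultimately show ?thesis
    using c0 unfolding Sm_def c_def
    by (smt (verit, ccfv_SIG) mult_right_mono)
qed

lemma const_id:
  assumes h: "h > 0"
  shows "infsum (kap h) P3 = Delta h * euler_prod"
proof -
  define X where "X n = infsum (kap h) (Smooth (Sn n))" for n
  define C where "C = infsum (kap h) P3"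
  have lim1: "(\<lambda>n. Delta h * (\<Prod>i\<le>n. aa i)) \<longlonglongrightarrow> Delta h * euler_prod"
    by (intro tendsto_mult_left aa_lim)
  have ev: "eventually (\<lambda>n. Delta h * (\<Prod>i\<le>n. aa i) = X n) sequentially"
    using eventually_ge_at_top[of "2*h"]
    by eventually_elim (simp add: X_def smooth_sum[OF primeset_Sn] prod_lam[OF h])
  have lim2: "X \<longlonglongrightarrow> Delta h * euler_prod"
    using tendsto_cong[OF ev] lim1 by simp
  have g0: "(\<lambda>n. infsum (Phi h) P3 * real n powr (-1/4)) \<longlonglongrightarrow> 0"
  proof -
    have "(\<lambda>n. real n powr (-1/4)) \<longlonglongrightarrow> 0"
      by (rule tendsto_neg_powr) (simp_all add: filterlim_real_sequentially)
    then show ?thesis by (rule tendsto_mult_right_zero)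
  qed
  have "(\<lambda>n. X n - C) \<longlonglongrightarrow> 0"
  proof (rule Lim_null_comparison[OF _ g0])
    show "eventually (\<lambda>n. norm (X n - C) \<le> infsum (Phi h) P3 * real n powr (-1/4)) sequentially"
      using eventually_ge_at_top[of 1]
    proof eventually_elim
      case (elim n)
      then show ?case using tail_bound[OF h elim] by (simp add: X_def C_def abs_minus_commute)
    qed
  qed
  then have "X \<longlonglongrightarrow> C" by (rule LIM_zero_cancel)
  then show ?thesis using lim2 LIMSEQ_unique unfolding C_def by blast
qed

definition f3 :: "nat \<Rightarrow> trip \<Rightarrow> real" where
  "f3 h u = gsys h (fst u) (fst (snd u)) (snd (snd u)) / real (lcm3 (fst u) (fst (snd u)) (snd (snd u)))"
definition Bx3 :: "nat \<Rightarrow> nat \<Rightarrow> nat \<Rightarrow> trip set" where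
  "Bx3 A B C = {1..A} \<times> {1..B} \<times> {1..C}"
definition tmul :: "trip \<Rightarrow> trip \<Rightarrow> trip" where
  "tmul d m = (fst d * fst m, fst (snd d) * fst (snd m), snd (snd d) * snd (snd m))"
definition tdiv :: "trip \<Rightarrow> trip \<Rightarrow> trip" where
  "tdiv u d = (fst u div fst d, fst (snd u) div fst (snd d), snd (snd u) div snd (snd d))"
definition BxM :: "nat \<Rightarrow> trip \<Rightarrow> trip set" where
  "BxM N d = Bx3 (N div fst d) (N div fst (snd d)) (N div snd (snd d))"

lemma Ssum_Bx: "Ssum h x = (\<Sum>u\<in>Bx3 (nat \<lfloor>x\<rfloor>) (nat \<lfloor>x\<rfloor>) (nat \<lfloor>x\<rfloor>). f3 h u)"
  unfolding Ssum_def Bx3_def f3_def by (simp add: sum.cartesian_product case_prod_unfold)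

lemma oneD1:
  assumes "1 \<le> u" "u \<le> N" "d dvd (u::nat)"
  shows "1 \<le> d \<and> d \<le> N \<and> 1 \<le> u div d \<and> u div d \<le> N div d \<and> d * (u div d) = u"
proof -
  have d: "d > 0" using assms by (metis dvd_pos_nat less_le_trans zero_less_one)
  have "d \<le> u" using assms by (simp add: dvd_imp_le)
  moreover have "u div d > 0" using assms d by (metis dvd_div_eq_0_iff not_gr0 not_one_le_zero)
  moreover have "u div d \<le> N div d" using assms by (simp add: div_le_mono)
  ultimately show ?thesis using assms d by auto
qed

lemma oneD2:
  assumes "1 \<le> d" "d \<le> N" "1 \<le> m" "m \<le> N div d"
  shows "1 \<le> d * m \<and> d * m \<le> N \<and> d dvd d * m \<and> (d * m) div d = (m::nat)"
proof -
  have "d * m \<le> d * (N div d)" using assms by simp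
  also have "\<dots> \<le> N" by simp
  finally show ?thesis using assms by auto
qed

lemma finite_Dv: "u \<in> P3 \<Longrightarrow> finite (Dv u)"
proof -
  assume u: "u \<in> P3"
  have "Dv u \<subseteq> {..fst u} \<times> {..fst (snd u)} \<times> {..snd (snd u)}"
    using u by (auto simp: Dv_def P3_def dest: dvd_imp_le)
  then show ?thesis by (rule finite_subset) simp
qed

lemma Bx3_P3: "Bx3 A B C \<subseteq> P3" by (auto simp: Bx3_def P3_def)

lemma DD_tmul: "DD (tmul d m) = DD d * DD m"
  by (simp add: DD_def tmul_def)

lemma Ssum_conv:
  fixes N :: nat
  shows "(\<Sum>u\<in>Bx3 N N N. f3 h u) = (\<Sum>d\<in>Bx3 N N N. kap h d * (\<Sum>m\<in>BxM N d. 1 / real (DD m)))"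
proof -
  have "(\<Sum>u\<in>Bx3 N N N. f3 h u) = (\<Sum>u\<in>Bx3 N N N. \<Sum>d\<in>Dv u. kap h d * real (DD d) / real (DD u))"
  proof (rule sum.cong)
    fix u assume "u \<in> Bx3 N N N"
    then have uP: "u \<in> P3" using Bx3_P3 by blast
    show "f3 h u = (\<Sum>d\<in>Dv u. kap h d * real (DD d) / real (DD u))"
      unfolding f3_def divisor_identity[OF uP] by (simp add: sum_divide_distrib)
  qed simp
  also have "\<dots> = (\<Sum>(u,d)\<in>Sigma (Bx3 N N N) Dv. kap h d * real (DD d) / real (DD u))"
  proof (rule sum.Sigma)
    show "finite (Bx3 N N N)" by (simp add: Bx3_def)
    show "\<forall>u\<in>Bx3 N N N. finite (Dv u)" using Bx3_P3 finite_Dv by blast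
  qed
  also have "\<dots> = (\<Sum>(d,m)\<in>Sigma (Bx3 N N N) (BxM N). kap h d / real (DD m))"
  proof (rule sum.reindex_bij_witness[of _ "\<lambda>(d,m). (tmul d m, d)" "\<lambda>(u,d). (d, tdiv u d)"])
    fix a assume a: "a \<in> Sigma (Bx3 N N N) Dv"
    obtain u d where ud: "a = (u,d)" by (cases a) auto
    obtain u1 u2 u3 where u: "u = (u1,u2,u3)" by (cases u) auto
    obtain d1 d2 d3 where d: "d = (d1,d2,d3)" by (cases d) auto
    have h: "1 \<le> u1" "u1 \<le> N" "d1 dvd u1" "1 \<le> u2" "u2 \<le> N" "d2 dvd u2" "1 \<le> u3" "u3 \<le> N" "d3 dvd u3"
      using a by (auto simp: ud u d Bx3_def Dv_def)
    note r1 = oneD1[OF h(1-3)] and r2 = oneD1[OF h(4-6)] and r3 = oneD1[OF h(7-9)]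
    show "(case case a of (u, d) \<Rightarrow> (d, tdiv u d) of (d, m) \<Rightarrow> (tmul d m, d)) = a"
      using r1 r2 r3 by (simp add: ud u d tdiv_def tmul_def)
    show "(case a of (u, d) \<Rightarrow> (d, tdiv u d)) \<in> Sigma (Bx3 N N N) (BxM N)"
      using r1 r2 r3 by (simp add: ud u d tdiv_def BxM_def Bx3_def)
    have e: "d1 * (u1 div d1) = u1" "d2 * (u2 div d2) = u2" "d3 * (u3 div d3) = u3"
      using r1 r2 r3 by auto
    have "DD u = (d1 * (u1 div d1)) * (d2 * (u2 div d2)) * (d3 * (u3 div d3))"
      by (simp only: e) (simp add: u DD_def)
    also have "\<dots> = DD d * DD (tdiv u d)"
      by (simp add: u d tdiv_def DD_def mult_ac)
    finally have "DD u = DD d * DD (tdiv u d)" .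
    moreover have "DD d > 0" using r1 r2 r3 by (simp add: d DD_def)
    ultimately show "(case case a of (u, d) \<Rightarrow> (d, tdiv u d) of (d, m) \<Rightarrow> kap h d / real (DD m)) =
          (case a of (u, d) \<Rightarrow> kap h d * real (DD d) / real (DD u))"
      by (simp add: ud)
  next
    fix b assume b: "b \<in> Sigma (Bx3 N N N) (BxM N)"
    obtain d m where dm: "b = (d,m)" by (cases b) auto
    obtain m1 m2 m3 where m: "m = (m1,m2,m3)" by (cases m) auto
    obtain d1 d2 d3 where d: "d = (d1,d2,d3)" by (cases d) auto
    have h: "1 \<le> d1" "d1 \<le> N" "1 \<le> m1" "m1 \<le> N div d1" "1 \<le> d2" "d2 \<le> N" "1 \<le> m2" "m2 \<le> N div d2"
      "1 \<le> d3" "d3 \<le> N" "1 \<le> m3" "m3 \<le> N div d3"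
      using b by (auto simp: dm m d Bx3_def BxM_def)
    note r1 = oneD2[OF h(1-4)] and r2 = oneD2[OF h(5-8)] and r3 = oneD2[OF h(9-12)]
    show "(case case b of (d, m) \<Rightarrow> (tmul d m, d) of (u, d) \<Rightarrow> (d, tdiv u d)) = b"
      using r1 r2 r3 by (simp add: dm m d tdiv_def tmul_def)
    show "(case b of (d, m) \<Rightarrow> (tmul d m, d)) \<in> Sigma (Bx3 N N N) Dv"
      using r1 r2 r3 by (simp add: dm m d tmul_def Bx3_def Dv_def)
  qed
  also have "\<dots> = (\<Sum>d\<in>Bx3 N N N. \<Sum>m\<in>BxM N d. kap h d / real (DD m))"
    by (rule sum.Sigma[symmetric]) (auto simp: Bx3_def BxM_def)
  also have "\<dots> = (\<Sum>d\<in>Bx3 N N N. kap h d * (\<Sum>m\<in>BxM N d. 1 / real (DD m)))"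
    by (simp add: sum_distrib_left)
  finally show ?thesis .
qed

lemma harm3: "(\<Sum>m\<in>Bx3 A B C. 1 / real (DD m)) = harm A * harm B * harm C"
proof -
  have "(\<Sum>m\<in>Bx3 A B C. 1 / real (DD m)) = (\<Sum>a\<in>{1..A}. \<Sum>b\<in>{1..B}. \<Sum>c\<in>{1..C}. inverse (real a) * (inverse (real b) * inverse (real c)))"
    by (simp add: Bx3_def sum.cartesian_product DD_def case_prod_unfold divide_inverse mult_ac)
  also have "\<dots> = (\<Sum>a\<in>{1..A}. inverse (real a) * (\<Sum>b\<in>{1..B}. inverse (real b) * (\<Sum>c\<in>{1..C}. inverse (real c))))"
    by (simp add: sum_distrib_left)
  also have "\<dots> = harm A * (harm B * harm C)"
    by (simp only: harm_def sum_distrib_right[symmetric])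
  finally show ?thesis by (simp add: mult_ac)
qed

lemma Ssum_formula:
  "Ssum h x = (\<Sum>d\<in>Bx3 (nat \<lfloor>x\<rfloor>) (nat \<lfloor>x\<rfloor>) (nat \<lfloor>x\<rfloor>).
      kap h d * (harm (nat \<lfloor>x\<rfloor> div fst d) * harm (nat \<lfloor>x\<rfloor> div fst (snd d)) * harm (nat \<lfloor>x\<rfloor> div snd (snd d))))"
  by (simp add: Ssum_Bx Ssum_conv BxM_def harm3)

lemma ln_le_root4:
  assumes y: "y \<ge> (1::real)"
  shows "1 + ln y \<le> 5 * y powr (1/4)"
proof -
  define z where "z = y powr (1/4)"
  have z0: "z > 0" using y by (simp add: z_def)
  have "ln z = (1/4) * ln y" by (simp add: z_def)
  moreover have "ln z \<le> z - 1" by (rule ln_le_minus_one[OF z0])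
  ultimately have "ln y \<le> 4 * z - 4" by simp
  then show ?thesis using z0 unfolding z_def[symmetric] by simp
qed

lemma harm_upper:
  assumes n: "n \<ge> 1"
  shows "harm n \<le> 1 + ln (real n)"
proof -
  obtain m where m: "n = Suc m" using n by (cases n) auto
  have "harm (Suc m) - ln (real (Suc m)) \<le> harm (Suc 0) - ln (real (Suc 0))"
    using decseq_harm_diff_ln unfolding decseq_def by (metis le0)
  also have "\<dots> = 1" by (simp add: harm_def)
  finally show ?thesis by (simp add: m)
qed

lemma harm_est:
  fixes x :: real and d :: nat
  assumes x: "x \<ge> 1" and d1: "1 \<le> d" and dN: "d \<le> nat \<lfloor>x\<rfloor>"
  shows "\<bar>harm (nat \<lfloor>x\<rfloor> div d) - ln x\<bar> \<le> 1 + ln (real d)"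
    and "(0::real) \<le> harm (nat \<lfloor>x\<rfloor> div d)" and "harm (nat \<lfloor>x\<rfloor> div d) \<le> (1 + ln x :: real)"
proof -
  define N where "N = nat \<lfloor>x\<rfloor>"
  define k where "k = N div d"
  have Nx: "real N \<le> x" using x by (simp add: N_def)
  have xN: "x < real N + 1" using x by (simp add: N_def)
  have k1: "k \<ge> 1"
  proof -
    have "0 < N div d" using d1 dN by (simp add: N_def div_greater_zero_iff)
    then show ?thesis by (simp add: k_def)
  qed
  have kd: "k * d \<le> N" by (simp add: k_def)
  have Nk: "N < (k + 1) * d"
  proof -
    have "N = d * k + N mod d" by (simp add: k_def)
    moreover have "N mod d < d" using d1 by simp
    ultimately show ?thesis by (simp add: algebra_simps)
  qed
  have d0: "real d > 0" using d1 by simp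
  have "real k * real d \<le> x" using kd Nx by (metis of_nat_le_iff of_nat_mult order_trans)
  then have kx: "real k \<le> x / real d" using d0 by (simp add: field_simps)
  have "x < (real k + 1) * real d"
  proof -
    have "real N + 1 \<le> real ((k + 1) * d)" using Nk by linarith
    then show ?thesis using xN by (simp add: algebra_simps)
  qed
  then have xk: "x / real d < real k + 1" using d0 by (simp add: field_simps)
  have lnxd: "ln (x / real d) = ln x - ln (real d)" using d0 x by (simp add: ln_div)
  have lo: "ln x - ln (real d) \<le> harm k"
  proof -
    have "ln (x / real d) \<le> ln (real k + 1)" using xk d0 x by (intro ln_mono) auto
    also have "\<dots> \<le> harm k" by (rule ln_le_harm)
    finally show ?thesis using lnxd by simp
  qed
  have hi: "harm k \<le> 1 + ln x - ln (real d)"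
  proof -
    have "harm k \<le> 1 + ln (real k)" by (rule harm_upper[OF k1])
    also have "ln (real k) \<le> ln (x / real d)" using kx k1 by (intro ln_mono) auto
    finally show ?thesis using lnxd by simp
  qed
  have lnd: "ln (real d) \<ge> 0" using d1 by simp
  show "\<bar>harm (nat \<lfloor>x\<rfloor> div d) - ln x\<bar> \<le> 1 + ln (real d)"
    using lo hi lnd unfolding k_def N_def by linarith
  show "(0::real) \<le> harm (nat \<lfloor>x\<rfloor> div d)" by (rule harm_nonneg)
  show "harm (nat \<lfloor>x\<rfloor> div d) \<le> 1 + ln x"
    using hi lnd unfolding k_def N_def by linarith
qed

lemma prod3_est:
  fixes a b c L E :: real
  assumes L: "L \<ge> 0" and a: "0 \<le> a" "a \<le> 1 + L" and b: "0 \<le> b" "b \<le> 1 + L" and c: "0 \<le> c" "c \<le> 1 + L"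
    and ea: "\<bar>a - L\<bar> \<le> E" and eb: "\<bar>b - L\<bar> \<le> E" and ec: "\<bar>c - L\<bar> \<le> E"
  shows "\<bar>a * b * c - L ^ 3\<bar> \<le> 3 * (1 + L) ^ 2 * E"
proof -
  have E0: "E \<ge> 0" using ea by linarith
  have id: "a * b * c - L ^ 3 = (a - L) * (b * c) + L * ((b - L) * c) + L ^ 2 * (c - L)"
    by (simp add: algebra_simps power2_eq_square power3_eq_cube)
  have t1: "\<bar>(a - L) * (b * c)\<bar> \<le> E * (1 + L) ^ 2"
  proof -
    have "b * c \<le> (1 + L) * (1 + L)" using b c by (intro mult_mono) auto
    then have "\<bar>b * c\<bar> \<le> (1 + L) ^ 2" using b c by (simp add: power2_eq_square)
    then show ?thesis unfolding abs_mult using ea E0 by (intro mult_mono) auto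
  qed
  have t2: "\<bar>L * ((b - L) * c)\<bar> \<le> E * (1 + L) ^ 2"
  proof -
    have "\<bar>(b - L) * c\<bar> \<le> E * (1 + L)" unfolding abs_mult using eb c E0 by (intro mult_mono) auto
    then have "\<bar>L * ((b - L) * c)\<bar> \<le> (1 + L) * (E * (1 + L))"
      unfolding abs_mult[of L] using L E0 by (intro mult_mono) auto
    then show ?thesis by (simp add: power2_eq_square mult_ac)
  qed
  have t3: "\<bar>L ^ 2 * (c - L)\<bar> \<le> E * (1 + L) ^ 2"
  proof -
    have "L ^ 2 \<le> (1 + L) ^ 2" using L by (intro power_mono) auto
    then show ?thesis unfolding abs_mult using ec E0 L by (simp add: mult_mono mult.commute)
  qed
  have "\<bar>a * b * c - L ^ 3\<bar> \<le> \<bar>(a - L) * (b * c)\<bar> + \<bar>L * ((b - L) * c)\<bar> + \<bar>L ^ 2 * (c - L)\<bar>"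
    unfolding id by linarith
  also have "\<dots> \<le> 3 * (1 + L) ^ 2 * E"
  proof -
    have "3 * (1 + L) ^ 2 * E = E * (1 + L) ^ 2 + E * (1 + L) ^ 2 + E * (1 + L) ^ 2" by simp
    then show ?thesis using t1 t2 t3 by linarith
  qed
  finally show ?thesis .
qed

lemma coord_le_DD:
  assumes "d \<in> P3"
  shows "fst d \<le> DD d" "fst (snd d) \<le> DD d" "snd (snd d) \<le> DD d"
  using assms by (auto simp: P3_def DD_def)

lemma box_term:
  assumes x: "x \<ge> 1" and d: "d \<in> Bx3 (nat \<lfloor>x\<rfloor>) (nat \<lfloor>x\<rfloor>) (nat \<lfloor>x\<rfloor>)"
  shows "\<bar>harm (nat \<lfloor>x\<rfloor> div fst d) * harm (nat \<lfloor>x\<rfloor> div fst (snd d)) * harm (nat \<lfloor>x\<rfloor> div snd (snd d)) - ln x ^ 3\<bar>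
         \<le> 15 * (1 + ln x) ^ 2 * real (DD d) powr (1/4)"
proof -
  define E where "E = 1 + ln (real (DD d))"
  have dP: "d \<in> P3" using d Bx3_P3 by blast
  have DD1: "real (DD d) \<ge> 1" using P3_DD[OF dP] by simp
  have c: "1 \<le> fst d" "fst d \<le> nat \<lfloor>x\<rfloor>" "1 \<le> fst (snd d)" "fst (snd d) \<le> nat \<lfloor>x\<rfloor>"
      "1 \<le> snd (snd d)" "snd (snd d) \<le> nat \<lfloor>x\<rfloor>"
    using d by (auto simp: Bx3_def)
  have lnle: "1 + ln (real k) \<le> E" if "1 \<le> k" "k \<le> DD d" for k
  proof -
    have "ln (real k) \<le> ln (real (DD d))" using that by (intro ln_mono) auto
    then show ?thesis by (simp add: E_def)
  qed
  have L0: "ln x \<ge> 0" using x by simp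
  note h1 = harm_est[OF x c(1) c(2)] and h2 = harm_est[OF x c(3) c(4)] and h3 = harm_est[OF x c(5) c(6)]
  have "\<bar>harm (nat \<lfloor>x\<rfloor> div fst d) * harm (nat \<lfloor>x\<rfloor> div fst (snd d)) * harm (nat \<lfloor>x\<rfloor> div snd (snd d)) - ln x ^ 3\<bar>
        \<le> 3 * (1 + ln x) ^ 2 * E"
  proof (rule prod3_est[OF L0])
    show "\<bar>harm (nat \<lfloor>x\<rfloor> div fst d) - ln x\<bar> \<le> E"
      using h1(1) lnle[OF c(1) coord_le_DD(1)[OF dP]] by linarith
    show "\<bar>harm (nat \<lfloor>x\<rfloor> div fst (snd d)) - ln x\<bar> \<le> E"
      using h2(1) lnle[OF c(3) coord_le_DD(2)[OF dP]] by linarith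
    show "\<bar>harm (nat \<lfloor>x\<rfloor> div snd (snd d)) - ln x\<bar> \<le> E"
      using h3(1) lnle[OF c(5) coord_le_DD(3)[OF dP]] by linarith
  qed (use h1 h2 h3 in auto)
  also have "\<dots> \<le> 3 * (1 + ln x) ^ 2 * (5 * real (DD d) powr (1/4))"
    unfolding E_def by (rule mult_left_mono[OF ln_le_root4[OF DD1]]) simp
  finally show ?thesis by simp
qed

lemma outside_term:
  assumes x: "x \<ge> exp 1" and d: "d \<in> P3 - Bx3 (nat \<lfloor>x\<rfloor>) (nat \<lfloor>x\<rfloor>) (nat \<lfloor>x\<rfloor>)"
  shows "\<bar>kap h d\<bar> \<le> Phi h d * (5 / ln x)"
proof -
  have x1: "x \<ge> 1" using x one_le_exp_iff[of "1::real"] by linarith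
  have L1: "ln x \<ge> 1" using x by (metis exp_gt_zero ln_exp ln_mono order_less_le_trans zero_less_one)
  have dP: "d \<in> P3" using d by blast
  have DD1: "real (DD d) \<ge> 1" using P3_DD[OF dP] by simp
  have "\<not> (fst d \<le> nat \<lfloor>x\<rfloor> \<and> fst (snd d) \<le> nat \<lfloor>x\<rfloor> \<and> snd (snd d) \<le> nat \<lfloor>x\<rfloor>)"
  proof
    assume a: "fst d \<le> nat \<lfloor>x\<rfloor> \<and> fst (snd d) \<le> nat \<lfloor>x\<rfloor> \<and> snd (snd d) \<le> nat \<lfloor>x\<rfloor>"
    have "d \<in> Bx3 (nat \<lfloor>x\<rfloor>) (nat \<lfloor>x\<rfloor>) (nat \<lfloor>x\<rfloor>)"
      using a dP by (cases d) (auto simp: Bx3_def P3_def)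
    then show False using d by blast
  qed
  then have "nat \<lfloor>x\<rfloor> < DD d" using coord_le_DD[OF dP] by linarith
  then have "real (nat \<lfloor>x\<rfloor>) + 1 \<le> real (DD d)" by linarith
  moreover have "x < real (nat \<lfloor>x\<rfloor>) + 1" using x1 by simp
  ultimately have xD: "x < real (DD d)" by linarith
  have "ln x \<le> ln (real (DD d))" using xD x1 by (intro ln_mono) auto
  also have "\<dots> \<le> 5 * real (DD d) powr (1/4)" using ln_le_root4[OF DD1] by simp
  finally have "ln x \<le> 5 * real (DD d) powr (1/4)" .
  then have "\<bar>kap h d\<bar> * ln x \<le> \<bar>kap h d\<bar> * (5 * real (DD d) powr (1/4))"
    by (rule mult_left_mono) simp
  then have "\<bar>kap h d\<bar> * ln x \<le> Phi h d * 5" by (simp add: Phi_def mult_ac)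
  then show ?thesis using L1 by (simp add: field_simps)
qed

lemma main_est:
  assumes h: "h > 0" and x: "x \<ge> exp 1"
  shows "\<bar>Ssum h x - infsum (kap h) P3 * ln x ^ 3\<bar> \<le> 65 * infsum (Phi h) P3 * ln x ^ 2"
proof -
  define L where "L = ln x"
  define N where "N = nat \<lfloor>x\<rfloor>"
  define Bx where "Bx = Bx3 N N N"
  define B where "B = infsum (Phi h) P3"
  define H :: "trip \<Rightarrow> real" where "H d = harm (N div fst d) * harm (N div fst (snd d)) * harm (N div snd (snd d))" for d
  have x1: "x \<ge> 1" using x one_le_exp_iff[of "1::real"] by linarith
  have L1: "L \<ge> 1" unfolding L_def using x by (metis exp_gt_zero ln_exp ln_mono order_less_le_trans zero_less_one)
  have B0: "B \<ge> 0" unfolding B_def by (rule infsum_nonneg) (simp add: Phi_nonneg)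
  have finBx: "finite Bx" by (simp add: Bx_def Bx3_def)
  have BxP: "Bx \<subseteq> P3" by (simp add: Bx_def Bx3_P3)
  have S: "Ssum h x = (\<Sum>d\<in>Bx. kap h d * H d)"
    by (simp add: Ssum_formula Bx_def H_def N_def)
  have Cd: "infsum (kap h) P3 = sum (kap h) Bx + infsum (kap h) (P3 - Bx)"
  proof -
    have "infsum (kap h) (P3 - Bx) = infsum (kap h) P3 - infsum (kap h) Bx"
      by (rule infsum_Diff[OF kap_summable[OF h] summable_on_subset[OF kap_summable[OF h] BxP] BxP])
    then show ?thesis using finBx by simp
  qed
  have eq: "Ssum h x - infsum (kap h) P3 * L ^ 3 = (\<Sum>d\<in>Bx. kap h d * (H d - L ^ 3)) - L ^ 3 * infsum (kap h) (P3 - Bx)"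
    unfolding S Cd by (simp add: algebra_simps sum_subtractf sum_distrib_right)
  have T1: "\<bar>\<Sum>d\<in>Bx. kap h d * (H d - L ^ 3)\<bar> \<le> 15 * (1 + L) ^ 2 * B"
  proof -
    have "\<bar>\<Sum>d\<in>Bx. kap h d * (H d - L ^ 3)\<bar> \<le> (\<Sum>d\<in>Bx. \<bar>kap h d * (H d - L ^ 3)\<bar>)"
      by (rule sum_abs)
    also have "\<dots> \<le> (\<Sum>d\<in>Bx. 15 * (1 + L) ^ 2 * Phi h d)"
    proof (rule sum_mono)
      fix d assume dB: "d \<in> Bx"
      have "\<bar>H d - L ^ 3\<bar> \<le> 15 * (1 + L) ^ 2 * real (DD d) powr (1/4)"
        using box_term[OF x1, of d] dB by (simp add: H_def L_def N_def Bx_def)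
      then have "\<bar>kap h d\<bar> * \<bar>H d - L ^ 3\<bar> \<le> \<bar>kap h d\<bar> * (15 * (1 + L) ^ 2 * real (DD d) powr (1/4))"
        by (rule mult_left_mono) simp
      then show "\<bar>kap h d * (H d - L ^ 3)\<bar> \<le> 15 * (1 + L) ^ 2 * Phi h d"
        by (simp add: abs_mult Phi_def mult_ac)
    qed
    also have "\<dots> = 15 * (1 + L) ^ 2 * sum (Phi h) Bx" by (simp add: sum_distrib_left)
    also have "sum (Phi h) Bx \<le> B"
      unfolding B_def by (rule finite_sum_le_infsum[OF Phi_summable[OF h] finBx BxP]) (simp add: Phi_nonneg)
    then have "15 * (1 + L) ^ 2 * sum (Phi h) Bx \<le> 15 * (1 + L) ^ 2 * B"
      by (rule mult_left_mono) simp
    finally show ?thesis .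
  qed
  have T2: "\<bar>infsum (kap h) (P3 - Bx)\<bar> \<le> B * (5 / L)"
  proof -
    have "\<bar>infsum (kap h) (P3 - Bx)\<bar> \<le> infsum (\<lambda>d. \<bar>kap h d\<bar>) (P3 - Bx)"
    proof -
      have "(\<lambda>d. norm (kap h d)) summable_on (P3 - Bx)"
        using summable_on_subset[OF kap_abs_summable[OF h], of "P3 - Bx"] by simp
      then have "norm (infsum (kap h) (P3 - Bx)) \<le> infsum (\<lambda>d. norm (kap h d)) (P3 - Bx)"
        by (rule norm_infsum_bound)
      then show ?thesis by simp
    qed
    also have "\<dots> \<le> infsum (\<lambda>d. Phi h d * (5 / L)) (P3 - Bx)"
    proof (rule infsum_mono)
      show "(\<lambda>d. \<bar>kap h d\<bar>) summable_on P3 - Bx"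
        using summable_on_subset[OF kap_abs_summable[OF h], of "P3 - Bx"] by simp
      show "(\<lambda>d. Phi h d * (5 / L)) summable_on P3 - Bx"
        by (rule summable_on_cmult_left) (rule summable_on_subset[OF Phi_summable[OF h]], auto)
      fix d assume "d \<in> P3 - Bx"
      then show "\<bar>kap h d\<bar> \<le> Phi h d * (5 / L)"
        unfolding L_def Bx_def N_def by (rule outside_term[OF x])
    qed
    also have "\<dots> = infsum (Phi h) (P3 - Bx) * (5 / L)" by (rule infsum_cmult_left')
    also have "infsum (Phi h) (P3 - Bx) \<le> B"
      unfolding B_def by (rule infsum_mono2) (auto simp: Phi_nonneg intro: summable_on_subset[OF Phi_summable[OF h]])
    then have "infsum (Phi h) (P3 - Bx) * (5 / L) \<le> B * (5 / L)"
      by (rule mult_right_mono) (use L1 in simp)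
    finally show ?thesis .
  qed
  have "\<bar>Ssum h x - infsum (kap h) P3 * L ^ 3\<bar> \<le> \<bar>\<Sum>d\<in>Bx. kap h d * (H d - L ^ 3)\<bar> + L ^ 3 * \<bar>infsum (kap h) (P3 - Bx)\<bar>"
  proof -
    have "\<bar>L ^ 3 * infsum (kap h) (P3 - Bx)\<bar> = L ^ 3 * \<bar>infsum (kap h) (P3 - Bx)\<bar>"
      using L1 by (simp add: abs_mult)
    then show ?thesis unfolding eq
      using abs_triangle_ineq4[of "\<Sum>d\<in>Bx. kap h d * (H d - L ^ 3)" "L ^ 3 * infsum (kap h) (P3 - Bx)"] by linarith
  qed
  also have "\<dots> \<le> 15 * (1 + L) ^ 2 * B + L ^ 3 * (B * (5 / L))"
    using T1 T2 L1 by (intro add_mono mult_left_mono) auto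
  also have "L ^ 3 * (B * (5 / L)) = 5 * B * L ^ 2"
    using L1 by (simp add: power2_eq_square power3_eq_cube field_simps)
  also have "15 * (1 + L) ^ 2 * B \<le> 15 * (4 * L ^ 2) * B"
  proof -
    have "(1 + L) ^ 2 \<le> (2 * L) ^ 2" using L1 by (intro power_mono) auto
    then show ?thesis using B0 by (simp add: mult_right_mono)
  qed
  finally show ?thesis by (simp add: L_def B_def algebra_simps)
qed

theorem proposition3p1:
  fixes h :: nat
  assumes "h > 0"
  shows "Delta h \<noteq> 0 \<and>
         (\<lambda>x::real. Ssum h x - Delta h * euler_prod * (ln x) ^ 3) \<in> O[at_top](\<lambda>x. (ln x) ^ 2)"
proof
  show "Delta h \<noteq> 0" by (rule Delta_nonzero[OF assms])
  show "(\<lambda>x::real. Ssum h x - Delta h * euler_prod * (ln x) ^ 3) \<in> O[at_top](\<lambda>x. (ln x) ^ 2)"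
  proof (rule bigoI)
    show "eventually (\<lambda>x. norm (Ssum h x - Delta h * euler_prod * (ln x) ^ 3) \<le> (65 * infsum (Phi h) P3) * norm ((ln x) ^ 2)) at_top"
      using eventually_ge_at_top[of "exp 1 :: real"]
    proof eventually_elim
      case (elim x)
      then show ?case using main_est[OF assms elim] const_id[OF assms] by simp
    qed
  qed
qed

end
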